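(* Let $\sigma\ge2$ and let $(v_\circ,\mathcal V,\mathcal E)$ be a rooted connected Toom graph with $\sigma$ charges that is not the trivial Toom graph; let $N:=|V|-1$ and $M:=|\mathcal E|$. Then there exist a unique bijection $\eta:V\to\{0,\dots,N\}$ and incomplete Toom graphs $(\mathcal V'(e),\mathcal E'(e))_{0\le e\le M}$ such that, writing $(\mathcal V(e),\mathcal E(e))$ for the typed directed graph obtained from $(\mathcal V'(e),\mathcal E'(e))$ by relabelling each vertex $u$ as $\eta^{-1}(u)$: (i) $\eta(v_\circ)=0$; (ii) $(\mathcal V'(0),\mathcal E'(0))$ is the trivial incomplete Toom graph and $(\mathcal V(M),\mathcal E(M))=(\mathcal V,\mathcal E)$; (iii) for every $0<e\le M$, $(\mathcal V'(e),\mathcal E'(e))$ is an extension of $(\mathcal V'(e-1),\mathcal E'(e-1))$ at its most urgent loose end.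
   Context: A typed directed graph with vertex set $V$, vertex types $A$, edge types $B$ is a pair $(\mathcal V,\mathcal E)$, $\mathcal V\subset V\times A$, $\mathcal E\subset V\times V\times B$ (an element $(v,w,b)$ is a directed edge from $v$ to $w$ of type $b$), with every vertex having at least one type; $V_a$, $\vec E_b$, $\vec E_{b,\rm in}(v)$, $\vec E_{b,\rm out}(v)$ as usual; connected means the underlying undirected graph is connected. A Toom graph with $\sigma$ charges: vertex types $\{\circ,\ast,1,\dots,\sigma\}$, edge types $\{1,\dots,\sigma\}$, with (i) $v\in V_\circ$: no incoming edges and $|\vec E_{1,\rm out}(v)|=\dots=|\vec E_{\sigma,\rm out}(v)|\le1$; (ii) $v\in V_\ast$: no outgoing edges and $|\vec E_{1,\rm in}(v)|=\dots=|\vec E_{\sigma,\rm in}(v)|\le1$; (iii) $v\in V_s$: exactly one incoming and one outgoing edge of charge $s$ and none of other charges. A rooted Toom graph is a triple $(v_\circ,\mathcal V,\mathcal E)$ with $v_\circ\in V_\circ$. The trivial Toom graph: $V_\circ=V_\ast=\{0\}$, no other vertices, no edges. An incomplete Toom graph with $\sigma\ge2$ charges: connected typed directed graph with these type sets, vertex set $\{0,\dots,N\}$, $0\in V_\circ$, such that (i) $v\in V_\circ$: no incoming edges, at most one outgoing edge of each charge; (ii) $v\in V_\ast$: no outgoing edges, at most one incoming of each charge; (iii) $v\in V_s$: at most one incoming and at most one outgoing edge of charge $s$, none of other charges; and either it is the trivial Toom graph or (iv) every $v\in(V_\sigma\cup V_\circ)\setminus\{0\}$ has exactly one outgoing edge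 of charge $\sigma$; (v) every $v\in V_s$ with $1\le s<\sigma$ has exactly one incoming edge of charge $s$; (vi) every $v\in V_\ast$ has an incoming edge of some charge $1\le s<\sigma$. The trivial incomplete Toom graph has $V=V_\circ=\{0\}$, $V_\ast=\emptyset$, $V_s=\emptyset$, no edges. A loose end is a pair $(v,s)$ with either $v\in V_\circ\cup V_s$, $1\le s<\sigma$, and no outgoing edge of charge $s$ at $v$; or $v\in V_\ast\cup V_\sigma$, $s=\sigma$, and no incoming edge of charge $\sigma$ at $v$. The most urgent loose end is the one with the smallest charge $s$ and, among those, the smallest vertex $v$. An extension of an incomplete Toom graph $(\mathcal V,\mathcal E)$ at a loose end $(v,s)$ is an incomplete Toom graph $(\mathcal V',\mathcal E')$ with $\mathcal V\subset\mathcal V'$, $\mathcal E\subset\mathcal E'$ and $\mathcal E'\setminus\mathcal E$ a single element, of the form $(v,w,s)$ if $s<\sigma$ and $(w,v,\sigma)$ if $s=\sigma$. *)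

theory Defs
  imports Main
begin

text \<open>Vertex types: Circ = source type, Star = sink type, Chg s = charge s (1 \<le> s \<le> sigma).
  Edge types are charges, represented as natural numbers in {1..sigma}.\<close>
datatype vty = Circ | Star | Chg nat

definition vtypes :: "nat \<Rightarrow> vty set" where
  "vtypes \<sigma> = {Circ, Star} \<union> Chg ` {1..\<sigma>}"

definition typed_digraph ::
  "'v set \<Rightarrow> 'a set \<Rightarrow> 'b set \<Rightarrow> ('v \<times> 'a) set \<Rightarrow> ('v \<times> 'v \<times> 'b) set \<Rightarrow> bool" where
  "typed_digraph V A B Vs Es \<longleftrightarrow>
     Vs \<subseteq> V \<times> A \<and> Es \<subseteq> V \<times> V \<times> B \<and> (\<forall>v\<in>V. \<exists>a. (v, a) \<in> Vs)"

definition Vty :: "('v \<times> 'a) set \<Rightarrow> 'a \<Rightarrow> 'v set" where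
  "Vty Vs a = {v. (v, a) \<in> Vs}"

definition Ein :: "('v \<times> 'v \<times> 'b) set \<Rightarrow> 'b \<Rightarrow> 'v \<Rightarrow> ('v \<times> 'v \<times> 'b) set" where
  "Ein Es b v = {e \<in> Es. \<exists>w. e = (w, v, b)}"

definition Eout :: "('v \<times> 'v \<times> 'b) set \<Rightarrow> 'b \<Rightarrow> 'v \<Rightarrow> ('v \<times> 'v \<times> 'b) set" where
  "Eout Es b v = {e \<in> Es. \<exists>w. e = (v, w, b)}"

definition graph_connected :: "'v set \<Rightarrow> ('v \<times> 'v \<times> 'b) set \<Rightarrow> bool" where
  "graph_connected V Es \<longleftrightarrow>
     (\<forall>v\<in>V. \<forall>w\<in>V. (v, w) \<in> {(x, y). \<exists>b. (x, y, b) \<in> Es \<or> (y, x, b) \<in> Es}\<^sup>*)"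

definition toom_graph ::
  "nat \<Rightarrow> 'v set \<Rightarrow> ('v \<times> vty) set \<Rightarrow> ('v \<times> 'v \<times> nat) set \<Rightarrow> bool" where
  "toom_graph \<sigma> V Vs Es \<longleftrightarrow>
     typed_digraph V (vtypes \<sigma>) {1..\<sigma>} Vs Es \<and>
     (\<forall>v\<in>Vty Vs Circ.
        (\<forall>s\<in>{1..\<sigma>}. Ein Es s v = {}) \<and>
        (\<forall>s\<in>{1..\<sigma>}. \<forall>t\<in>{1..\<sigma>}. card (Eout Es s v) = card (Eout Es t v)) \<and>
        (\<forall>s\<in>{1..\<sigma>}. card (Eout Es s v) \<le> 1)) \<and>
     (\<forall>v\<in>Vty Vs Star.
        (\<forall>s\<in>{1..\<sigma>}. Eout Es s v = {}) \<and>
        (\<forall>s\<in>{1..\<sigma>}. \<forall>t\<in>{1..\<sigma>}. card (Ein Es s v) = card (Ein Es t v)) \<and>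
        (\<forall>s\<in>{1..\<sigma>}. card (Ein Es s v) \<le> 1)) \<and>
     (\<forall>s\<in>{1..\<sigma>}. \<forall>v\<in>Vty Vs (Chg s).
        card (Ein Es s v) = 1 \<and> card (Eout Es s v) = 1 \<and>
        (\<forall>t\<in>{1..\<sigma>}. t \<noteq> s \<longrightarrow> Ein Es t v = {} \<and> Eout Es t v = {}))"

definition trivial_toom :: "('v \<times> vty) set \<Rightarrow> ('v \<times> 'v \<times> nat) set \<Rightarrow> bool" where
  "trivial_toom Vs Es \<longleftrightarrow> (\<exists>x. Vs = {(x, Circ), (x, Star)} \<and> Es = {})"

definition incomplete_toom ::
  "nat \<Rightarrow> (nat \<times> vty) set \<Rightarrow> (nat \<times> nat \<times> nat) set \<Rightarrow> bool" where
  "incomplete_toom \<sigma> Vs Es \<longleftrightarrow>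
    (\<exists>N. typed_digraph {0..N} (vtypes \<sigma>) {1..\<sigma>} Vs Es \<and> graph_connected {0..N} Es) \<and>
    (0, Circ) \<in> Vs \<and>
    (\<forall>v\<in>Vty Vs Circ.
        (\<forall>s\<in>{1..\<sigma>}. Ein Es s v = {}) \<and> (\<forall>s\<in>{1..\<sigma>}. card (Eout Es s v) \<le> 1)) \<and>
    (\<forall>v\<in>Vty Vs Star.
        (\<forall>s\<in>{1..\<sigma>}. Eout Es s v = {}) \<and> (\<forall>s\<in>{1..\<sigma>}. card (Ein Es s v) \<le> 1)) \<and>
    (\<forall>s\<in>{1..\<sigma>}. \<forall>v\<in>Vty Vs (Chg s).
        card (Ein Es s v) \<le> 1 \<and> card (Eout Es s v) \<le> 1 \<and>
        (\<forall>t\<in>{1..\<sigma>}. t \<noteq> s \<longrightarrow> Ein Es t v = {} \<and> Eout Es t v = {})) \<and>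
    (Vs = {(0, Circ), (0, Star)} \<and> Es = {} \<or>
      ((\<forall>v\<in>(Vty Vs (Chg \<sigma>) \<union> Vty Vs Circ) - {0}. card (Eout Es \<sigma> v) = 1) \<and>
       (\<forall>s\<in>{1..<\<sigma>}. \<forall>v\<in>Vty Vs (Chg s). card (Ein Es s v) = 1) \<and>
       (\<forall>v\<in>Vty Vs Star. \<exists>s\<in>{1..<\<sigma>}. Ein Es s v \<noteq> {})))"

definition trivial_incomplete_toom :: "(nat \<times> vty) set \<times> (nat \<times> nat \<times> nat) set" where
  "trivial_incomplete_toom = ({(0, Circ)}, {})"

definition loose_end ::
  "nat \<Rightarrow> (nat \<times> vty) set \<Rightarrow> (nat \<times> nat \<times> nat) set \<Rightarrow> nat \<times> nat \<Rightarrow> bool" where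
  "loose_end \<sigma> Vs Es vs \<longleftrightarrow> (case vs of (v, s) \<Rightarrow>
     (v \<in> Vty Vs Circ \<union> Vty Vs (Chg s) \<and> 1 \<le> s \<and> s < \<sigma> \<and> Eout Es s v = {}) \<or>
     (v \<in> Vty Vs Star \<union> Vty Vs (Chg \<sigma>) \<and> s = \<sigma> \<and> Ein Es \<sigma> v = {}))"

definition most_urgent_loose_end ::
  "nat \<Rightarrow> (nat \<times> vty) set \<Rightarrow> (nat \<times> nat \<times> nat) set \<Rightarrow> nat \<times> nat \<Rightarrow> bool" where
  "most_urgent_loose_end \<sigma> Vs Es vs \<longleftrightarrow> loose_end \<sigma> Vs Es vs \<and>
     (\<forall>v' s'. loose_end \<sigma> Vs Es (v', s') \<longrightarrow>
        snd vs < s' \<or> (snd vs = s' \<and> fst vs \<le> v'))"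

definition extension_at ::
  "nat \<Rightarrow> (nat \<times> vty) set \<times> (nat \<times> nat \<times> nat) set \<Rightarrow> nat \<times> nat
     \<Rightarrow> (nat \<times> vty) set \<times> (nat \<times> nat \<times> nat) set \<Rightarrow> bool" where
  "extension_at \<sigma> G vs G' \<longleftrightarrow> (case G of (Vs, Es) \<Rightarrow> case G' of (Vs', Es') \<Rightarrow> case vs of (v, s) \<Rightarrow>
     incomplete_toom \<sigma> Vs' Es' \<and> Vs \<subseteq> Vs' \<and> Es \<subseteq> Es' \<and>
     (\<exists>w. Es' - Es = {if s < \<sigma> then (v, w, s) else (w, v, \<sigma>)}))"

definition relabel :: "('u \<Rightarrow> 'v) \<Rightarrow> ('u \<times> 'a) set \<times> ('u \<times> 'u \<times> 'b) set
    \<Rightarrow> ('v \<times> 'a) set \<times> ('v \<times> 'v \<times> 'b) set" where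
  "relabel f G = ((\<lambda>(u, a). (f u, a)) ` fst G, (\<lambda>(u, w, b). (f u, f w, b)) ` snd G)"

end

theory Submission
  imports Defs
begin

definition adjr :: "('v \<times> 'v \<times> 'b) set \<Rightarrow> ('v \<times> 'v) set" where
  "adjr E = {(x, y). \<exists>b. (x, y, b) \<in> E \<or> (y, x, b) \<in> E}"

lemma gc_def2: "graph_connected V E \<longleftrightarrow> (\<forall>v\<in>V. \<forall>w\<in>V. (v, w) \<in> (adjr E)\<^sup>*)"
  unfolding graph_connected_def adjr_def by simp

lemma adjr_iff: "(x, y) \<in> adjr E \<longleftrightarrow> (\<exists>b. (x, y, b) \<in> E \<or> (y, x, b) \<in> E)"
  unfolding adjr_def by simp

lemma gcD: "graph_connected V E \<Longrightarrow> v \<in> V \<Longrightarrow> w \<in> V \<Longrightarrow> (v, w) \<in> (adjr E)\<^sup>*"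
  unfolding gc_def2 by blast

lemma reach_closed:
  assumes "(a, b) \<in> (adjr E)\<^sup>*" "a \<in> S"
    and "\<And>x y. (x, y) \<in> adjr E \<Longrightarrow> x \<in> S \<Longrightarrow> y \<in> S"
  shows "b \<in> S"
  using assms(1,2) by (induction rule: rtrancl_induct) (auto intro: assms(3))

lemma card_le1_eq: assumes "finite A" "card A \<le> 1" "a \<in> A" "b \<in> A" shows "a = b"
  using card_le_Suc0_iff_eq[OF assms(1)] assms(2-4) by (metis One_nat_def)

lemma card_le1I: assumes "finite A" "\<And>a b. a \<in> A \<Longrightarrow> b \<in> A \<Longrightarrow> a = b" shows "card A \<le> 1"
  using card_le_Suc0_iff_eq[OF assms(1)] assms(2) by (metis One_nat_def)

lemma vtypes_cases: "a \<in> vtypes \<sigma> \<Longrightarrow> a = Circ \<or> a = Star \<or> (\<exists>s. 1 \<le> s \<and> s \<le> \<sigma> \<and> a = Chg s)"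
  unfolding vtypes_def by auto

locale TG =
  fixes \<sigma> :: nat and V :: "'v set" and v0 :: 'v
    and Vs :: "('v \<times> vty) set" and Es :: "('v \<times> 'v \<times> nat) set"
  assumes sig: "\<sigma> \<ge> 2"
    and finV: "finite V"
    and tg: "toom_graph \<sigma> V Vs Es"
    and v0C: "v0 \<in> Vty Vs Circ"
    and conn: "graph_connected V Es"
    and ntriv: "\<not> trivial_toom Vs Es"
begin

lemma v0C': "(v0, Circ) \<in> Vs" using v0C unfolding Vty_def by simp

lemma Vs_sub: "Vs \<subseteq> V \<times> vtypes \<sigma>" and Es_sub: "Es \<subseteq> V \<times> V \<times> {1..\<sigma>}"
  and has_type: "v \<in> V \<Longrightarrow> \<exists>a. (v, a) \<in> Vs"
  using tg unfolding toom_graph_def typed_digraph_def by auto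

lemma v0V: "v0 \<in> V" using v0C' Vs_sub by auto

lemma finEs: "finite Es"
  by (rule finite_subset[OF Es_sub]) (use finV in auto)

lemma edgeD: "(x, y, b) \<in> Es \<Longrightarrow> x \<in> V \<and> y \<in> V \<and> 1 \<le> b \<and> b \<le> \<sigma>"
  using Es_sub by auto

lemma typeD: "(x, a) \<in> Vs \<Longrightarrow> x \<in> V \<and> (a = Circ \<or> a = Star \<or> (\<exists>s. 1 \<le> s \<and> s \<le> \<sigma> \<and> a = Chg s))"
  using Vs_sub vtypes_cases by blast

lemma finEin: "finite (Ein Es b x)" and finEout: "finite (Eout Es b x)"
  using finEs unfolding Ein_def Eout_def by auto

lemma circ_props: "(x, Circ) \<in> Vs \<Longrightarrow>
   (\<forall>s\<in>{1..\<sigma>}. Ein Es s x = {}) \<and>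
   (\<forall>s\<in>{1..\<sigma>}. \<forall>t\<in>{1..\<sigma>}. card (Eout Es s x) = card (Eout Es t x)) \<and>
   (\<forall>s\<in>{1..\<sigma>}. card (Eout Es s x) \<le> 1)"
  using tg unfolding toom_graph_def Vty_def by blast

lemma star_props: "(x, Star) \<in> Vs \<Longrightarrow>
   (\<forall>s\<in>{1..\<sigma>}. Eout Es s x = {}) \<and>
   (\<forall>s\<in>{1..\<sigma>}. \<forall>t\<in>{1..\<sigma>}. card (Ein Es s x) = card (Ein Es t x)) \<and>
   (\<forall>s\<in>{1..\<sigma>}. card (Ein Es s x) \<le> 1)"
  using tg unfolding toom_graph_def Vty_def by blast

lemma chg_props: "(x, Chg s) \<in> Vs \<Longrightarrow>
   card (Ein Es s x) = 1 \<and> card (Eout Es s x) = 1 \<and>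
        (\<forall>t\<in>{1..\<sigma>}. t \<noteq> s \<longrightarrow> Ein Es t x = {} \<and> Eout Es t x = {})"
proof -
  assume a: "(x, Chg s) \<in> Vs"
  then have "s \<in> {1..\<sigma>}" using typeD by auto
  then show ?thesis using a tg unfolding toom_graph_def Vty_def by blast
qed

lemma circ_le1: "(x, Circ) \<in> Vs \<Longrightarrow> b \<in> {1..\<sigma>} \<Longrightarrow> card (Eout Es b x) \<le> 1"
  using circ_props by blast
lemma circ_eq: "(x, Circ) \<in> Vs \<Longrightarrow> b \<in> {1..\<sigma>} \<Longrightarrow> s \<in> {1..\<sigma>} \<Longrightarrow> card (Eout Es b x) = card (Eout Es s x)"
  using circ_props by blast
lemma star_le1: "(x, Star) \<in> Vs \<Longrightarrow> b \<in> {1..\<sigma>} \<Longrightarrow> card (Ein Es b x) \<le> 1"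
  using star_props by blast
lemma star_eq: "(x, Star) \<in> Vs \<Longrightarrow> b \<in> {1..\<sigma>} \<Longrightarrow> s \<in> {1..\<sigma>} \<Longrightarrow> card (Ein Es b x) = card (Ein Es s x)"
  using star_props by blast
lemma chg_in1: "(x, Chg s) \<in> Vs \<Longrightarrow> card (Ein Es s x) = 1" using chg_props by blast
lemma chg_out1: "(x, Chg s) \<in> Vs \<Longrightarrow> card (Eout Es s x) = 1" using chg_props by blast

lemma circ_noin: assumes "(x, Circ) \<in> Vs" "(y, x, b) \<in> Es" shows False
proof -
  have "b \<in> {1..\<sigma>}" using edgeD[OF assms(2)] by auto
  then have "Ein Es b x = {}" using circ_props[OF assms(1)] by blast
  then show False using assms(2) unfolding Ein_def by auto
qed

lemma star_noout: assumes "(x, Star) \<in> Vs" "(x, y, b) \<in> Es" shows False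
proof -
  have "b \<in> {1..\<sigma>}" using edgeD[OF assms(2)] by auto
  then have "Eout Es b x = {}" using star_props[OF assms(1)] by blast
  then show False using assms(2) unfolding Eout_def by auto
qed

lemma chg_in: assumes "(x, Chg s) \<in> Vs" "(y, x, b) \<in> Es" shows "b = s"
proof (rule ccontr)
  assume "b \<noteq> s"
  moreover have "b \<in> {1..\<sigma>}" using edgeD[OF assms(2)] by auto
  ultimately have "Ein Es b x = {}" using chg_props[OF assms(1)] by blast
  then show False using assms(2) unfolding Ein_def by auto
qed

lemma chg_out: assumes "(x, Chg s) \<in> Vs" "(x, y, b) \<in> Es" shows "b = s"
proof (rule ccontr)
  assume "b \<noteq> s"
  moreover have "b \<in> {1..\<sigma>}" using edgeD[OF assms(2)] by auto
  ultimately have "Eout Es b x = {}" using chg_props[OF assms(1)] by blast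
  then show False using assms(2) unfolding Eout_def by auto
qed

lemma chg_out_ex: "(x, Chg s) \<in> Vs \<Longrightarrow> \<exists>y. (x, y, s) \<in> Es"
proof -
  assume "(x, Chg s) \<in> Vs"
  then have "Eout Es s x \<noteq> {}" using chg_out1 by fastforce
  then show ?thesis unfolding Eout_def by auto
qed

lemma chg_in_ex: "(x, Chg s) \<in> Vs \<Longrightarrow> \<exists>y. (y, x, s) \<in> Es"
proof -
  assume "(x, Chg s) \<in> Vs"
  then have "Ein Es s x \<noteq> {}" using chg_in1 by fastforce
  then show ?thesis unfolding Ein_def by auto
qed

lemma out_uniq: assumes "(x, y, b) \<in> Es" "(x, y', b) \<in> Es" shows "y = y'"
proof -
  have xV: "x \<in> V" and b: "b \<in> {1..\<sigma>}" using edgeD[OF assms(1)] by auto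
  obtain a where a: "(x, a) \<in> Vs" using has_type[OF xV] by auto
  have c: "card (Eout Es b x) \<le> 1"
    using typeD[OF a] proof (elim disjE exE conjE)
    assume "a = Circ" then show ?thesis using circ_le1 a b by auto
  next
    assume "a = Star" then show ?thesis using star_noout a assms by auto
  next
    fix s assume "a = Chg s" then show ?thesis using chg_out[of x s y b] chg_out1[of x s] a assms by auto
  qed
  have "(x, y, b) = (x, y', b)"
    by (rule card_le1_eq[OF finEout c]) (use assms in \<open>auto simp: Eout_def\<close>)
  then show ?thesis by simp
qed

lemma in_uniq: assumes "(y, x, b) \<in> Es" "(y', x, b) \<in> Es" shows "y = y'"
proof -
  have xV: "x \<in> V" and b: "b \<in> {1..\<sigma>}" using edgeD[OF assms(1)] by auto
  obtain a where a: "(x, a) \<in> Vs" using has_type[OF xV] by auto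
  have c: "card (Ein Es b x) \<le> 1"
    using typeD[OF a] proof (elim disjE exE conjE)
    assume "a = Circ" then show ?thesis using circ_noin a assms by auto
  next
    assume "a = Star" then show ?thesis using star_le1 a b by auto
  next
    fix s assume "a = Chg s" then show ?thesis using chg_in[of x s y b] chg_in1[of x s] a assms by auto
  qed
  have "(y, x, b) = (y', x, b)"
    by (rule card_le1_eq[OF finEin c]) (use assms in \<open>auto simp: Ein_def\<close>)
  then show ?thesis by simp
qed

lemma isolated_single: assumes "x \<in> V" "\<And>y b. (x, y, b) \<notin> Es" "\<And>y b. (y, x, b) \<notin> Es"
  shows "V = {x}"
proof -
  have "y = x" if "y \<in> V" for y
  proof -
    have "(x, y) \<in> (adjr Es)\<^sup>*" using gcD[OF conn assms(1) that] .
    then show ?thesis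
    proof (cases rule: converse_rtranclE)
      case base then show ?thesis by simp
    next
      case (step z)
      then obtain c where "(x, z, c) \<in> Es \<or> (z, x, c) \<in> Es" using adjr_iff by metis
      then show ?thesis using assms(2,3) by blast
    qed
  qed
  then show ?thesis using assms(1) by blast
qed

lemma uniq_type0: assumes "(x, a) \<in> Vs" "(x, b) \<in> Vs" "a \<noteq> b"
  shows "{a, b} = {Circ, Star}"
proof -
  have A: "a = Circ \<or> a = Star \<or> (\<exists>s. 1 \<le> s \<and> s \<le> \<sigma> \<and> a = Chg s)" using typeD[OF assms(1)] by blast
  have B: "b = Circ \<or> b = Star \<or> (\<exists>s. 1 \<le> s \<and> s \<le> \<sigma> \<and> b = Chg s)" using typeD[OF assms(2)] by blast
  have nCC: False if "(x, Circ) \<in> Vs" "(x, Chg s) \<in> Vs" for s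
    using chg_in_ex[OF that(2)] circ_noin[OF that(1)] by blast
  have nSC: False if "(x, Star) \<in> Vs" "(x, Chg s) \<in> Vs" for s
    using chg_out_ex[OF that(2)] star_noout[OF that(1)] by blast
  have nCC2: False if "(x, Chg s) \<in> Vs" "(x, Chg t) \<in> Vs" "s \<noteq> t" for s t
    using chg_in_ex[OF that(2)] chg_in[OF that(1)] that(3) by blast
  have nA: "a = Circ \<or> a = Star"
  proof (rule ccontr)
    assume "\<not> (a = Circ \<or> a = Star)"
    then obtain s where s: "a = Chg s" using A by blast
    from B show False
    proof (elim disjE exE conjE)
      assume "b = Circ" then show False using nCC[of s] assms s by simp
    next
      assume "b = Star" then show False using nSC[of s] assms s by simp
    next
      fix t assume "b = Chg t" then show False using nCC2[of s t] assms s by auto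
    qed
  qed
  have nB: "b = Circ \<or> b = Star"
  proof (rule ccontr)
    assume "\<not> (b = Circ \<or> b = Star)"
    then obtain s where s: "b = Chg s" using B by blast
    from nA show False
    proof (elim disjE)
      assume "a = Circ" then show False using nCC[of s] assms s by simp
    next
      assume "a = Star" then show False using nSC[of s] assms s by simp
    qed
  qed
  from nA nB assms(3) show ?thesis by (auto simp: insert_commute)
qed

lemma uniq_type: assumes "(x, a) \<in> Vs" "(x, b) \<in> Vs" shows "a = b"
proof (rule ccontr)
  assume ne: "a \<noteq> b"
  then have ab: "{a, b} = {Circ, Star}" using uniq_type0 assms by blast
  then have C: "(x, Circ) \<in> Vs" and S: "(x, Star) \<in> Vs" using assms by (auto simp: doubleton_eq_iff)
  have xV: "x \<in> V" using typeD C by auto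
  have noout: "(x, y, c) \<notin> Es" for y c using star_noout[OF S] by blast
  have noin: "(y, x, c) \<notin> Es" for y c using circ_noin[OF C] by blast
  have V1: "V = {x}" using isolated_single[OF xV noout noin] .
  have "Es = {}" using Es_sub V1 noout by auto
  moreover have "Vs = {(x, Circ), (x, Star)}"
  proof
    show "Vs \<subseteq> {(x, Circ), (x, Star)}"
    proof
      fix p assume p: "p \<in> Vs"
      obtain y c where pyc: "p = (y, c)" by (cases p)
      then have "y = x" using p typeD V1 by auto
      then show "p \<in> {(x, Circ), (x, Star)}" using uniq_type0[of x c Circ] uniq_type0[of x c Star] p pyc C S
        by (cases "c = Circ"; cases "c = Star") (auto simp: doubleton_eq_iff)
    qed
  qed (use C S in auto)
  ultimately show False using ntriv unfolding trivial_toom_def by auto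
qed

lemma edge_src_type: "(x, y, b) \<in> Es \<Longrightarrow> (x, a) \<in> Vs \<Longrightarrow> a = Circ \<or> a = Chg b"
  using typeD[of x a] star_noout chg_out by blast

lemma edge_tgt_type: "(x, y, b) \<in> Es \<Longrightarrow> (y, a) \<in> Vs \<Longrightarrow> a = Star \<or> a = Chg b"
  using typeD[of y a] circ_noin chg_in by blast

lemma some_edge_at: assumes "Es \<noteq> {}" "x \<in> V" shows "\<exists>y b. (x, y, b) \<in> Es \<or> (y, x, b) \<in> Es"
proof -
  obtain a b c where abc: "(a, b, c) \<in> Es" using assms(1) by auto
  then have aV: "a \<in> V" using edgeD by auto
  have "(x, a) \<in> (adjr Es)\<^sup>*" using gcD[OF conn assms(2) aV] .
  then show ?thesis
  proof (cases rule: converse_rtranclE)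
    case base then show ?thesis using abc by blast
  next
    case (step z)
    then show ?thesis using adjr_iff by metis
  qed
qed

lemma circ_out_ex: assumes "Es \<noteq> {}" "(x, Circ) \<in> Vs" "1 \<le> s" "s \<le> \<sigma>"
  shows "\<exists>y. (x, y, s) \<in> Es"
proof -
  have xV: "x \<in> V" using typeD assms(2) by auto
  obtain y b where "(x, y, b) \<in> Es" using some_edge_at[OF assms(1) xV] circ_noin[OF assms(2)] by blast
  then have yb: "(x, y, b) \<in> Eout Es b x" and b: "b \<in> {1..\<sigma>}" using edgeD unfolding Eout_def by auto
  have "card (Eout Es b x) \<noteq> 0" using yb finEout by auto
  then have "card (Eout Es s x) \<noteq> 0" using circ_eq[OF assms(2) b, of s] assms(3,4) by auto
  then have "Eout Es s x \<noteq> {}" by auto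
  then show ?thesis unfolding Eout_def by auto
qed

lemma star_in_ex: assumes "Es \<noteq> {}" "(x, Star) \<in> Vs" "1 \<le> s" "s \<le> \<sigma>"
  shows "\<exists>y. (y, x, s) \<in> Es"
proof -
  have xV: "x \<in> V" using typeD assms(2) by auto
  obtain y b where "(y, x, b) \<in> Es" using some_edge_at[OF assms(1) xV] star_noout[OF assms(2)] by blast
  then have yb: "(y, x, b) \<in> Ein Es b x" and b: "b \<in> {1..\<sigma>}" using edgeD unfolding Ein_def by auto
  have "card (Ein Es b x) \<noteq> 0" using yb finEin by auto
  then have "card (Ein Es s x) \<noteq> 0" using star_eq[OF assms(2) b, of s] assms(3,4) by auto
  then have "Ein Es s x \<noteq> {}" by auto
  then show ?thesis unfolding Ein_def by auto
qed

end

definition Esof :: "'v list \<Rightarrow> ('v \<times> 'v \<times> nat) set \<Rightarrow> (nat \<times> nat \<times> nat) set" where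
  "Esof L F = {(i, j, b). i < length L \<and> j < length L \<and> (L ! i, L ! j, b) \<in> F}"

definition Vsof :: "('v \<times> vty) set \<Rightarrow> 'v list \<Rightarrow> (nat \<times> vty) set" where
  "Vsof W L = {(i, a). i < length L \<and> (L ! i, a) \<in> W}"

lemma mem_Esof[simp]: "(i, j, b) \<in> Esof L F \<longleftrightarrow> i < length L \<and> j < length L \<and> (L ! i, L ! j, b) \<in> F"
  unfolding Esof_def by simp

lemma mem_Vsof[simp]: "(i, a) \<in> Vsof W L \<longleftrightarrow> i < length L \<and> (L ! i, a) \<in> W"
  unfolding Vsof_def by simp

lemma Vty_Vsof[simp]: "i \<in> Vty (Vsof W L) a \<longleftrightarrow> i < length L \<and> (L ! i, a) \<in> W"
  unfolding Vty_def by simp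

lemma mem_Ein: "e \<in> Ein E b v \<longleftrightarrow> (\<exists>w. e = (w, v, b) \<and> (w, v, b) \<in> E)"
  unfolding Ein_def by auto

lemma mem_Eout: "e \<in> Eout E b v \<longleftrightarrow> (\<exists>w. e = (v, w, b) \<and> (v, w, b) \<in> E)"
  unfolding Eout_def by auto

lemma Ein_ne: "Ein E b v \<noteq> {} \<Longrightarrow> \<exists>w. (w, v, b) \<in> E"
  unfolding Ein_def by auto
lemma Eout_ne: "Eout E b v \<noteq> {} \<Longrightarrow> \<exists>w. (v, w, b) \<in> E"
  unfolding Eout_def by auto

lemma card1I: "finite A \<Longrightarrow> card A \<le> 1 \<Longrightarrow> a \<in> A \<Longrightarrow> card A = 1"
  using card_gt_0_iff[of A] by fastforce

context TG
begin

definition invar :: "'v list \<Rightarrow> ('v \<times> 'v \<times> nat) set \<Rightarrow> bool" where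
  "invar L F \<longleftrightarrow> distinct L \<and> L \<noteq> [] \<and> L ! 0 = v0 \<and> set L \<subseteq> V \<and> F \<subseteq> Es \<and>
     (\<forall>x y b. (x, y, b) \<in> F \<longrightarrow> x \<in> set L \<and> y \<in> set L) \<and>
     graph_connected {0..length L - 1} (Esof L F) \<and>
     (\<forall>x\<in>set L. x \<noteq> v0 \<longrightarrow> (x, Circ) \<in> Vs \<or> (x, Chg \<sigma>) \<in> Vs \<longrightarrow> (\<exists>y. (x, y, \<sigma>) \<in> F)) \<and>
     (\<forall>x\<in>set L. \<forall>s. 1 \<le> s \<longrightarrow> s < \<sigma> \<longrightarrow> (x, Chg s) \<in> Vs \<longrightarrow> (\<exists>y. (y, x, s) \<in> F)) \<and>
     (\<forall>x\<in>set L. (x, Star) \<in> Vs \<longrightarrow> (\<exists>y s. 1 \<le> s \<and> s < \<sigma> \<and> (y, x, s) \<in> F))"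

lemma invD:
  assumes "invar L F"
  shows "distinct L" "L \<noteq> []" "L ! 0 = v0" "set L \<subseteq> V" "F \<subseteq> Es"
    "\<And>x y b. (x, y, b) \<in> F \<Longrightarrow> x \<in> set L \<and> y \<in> set L"
    "graph_connected {0..length L - 1} (Esof L F)"
    "\<And>x. x \<in> set L \<Longrightarrow> x \<noteq> v0 \<Longrightarrow> (x, Circ) \<in> Vs \<or> (x, Chg \<sigma>) \<in> Vs \<Longrightarrow> \<exists>y. (x, y, \<sigma>) \<in> F"
    "\<And>x s. x \<in> set L \<Longrightarrow> 1 \<le> s \<Longrightarrow> s < \<sigma> \<Longrightarrow> (x, Chg s) \<in> Vs \<Longrightarrow> \<exists>y. (y, x, s) \<in> F"
    "\<And>x. x \<in> set L \<Longrightarrow> (x, Star) \<in> Vs \<Longrightarrow> \<exists>y s. 1 \<le> s \<and> s < \<sigma> \<and> (y, x, s) \<in> F"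
  using assms unfolding invar_def by blast+

lemma finite_Esof: "F \<subseteq> Es \<Longrightarrow> finite (Esof L F)"
proof -
  assume F: "F \<subseteq> Es"
  have "Esof L F \<subseteq> {..<length L} \<times> {..<length L} \<times> {1..\<sigma>}"
  proof
    fix e assume e: "e \<in> Esof L F"
    obtain i j b where ijb: "e = (i, j, b)" by (cases e)
    then have "(L ! i, L ! j, b) \<in> Es" using e F by auto
    then show "e \<in> {..<length L} \<times> {..<length L} \<times> {1..\<sigma>}" using e ijb edgeD by auto
  qed
  then show ?thesis by (rule finite_subset) auto
qed

lemma idxE: "x \<in> set L \<Longrightarrow> (\<And>k. k < length L \<Longrightarrow> L ! k = x \<Longrightarrow> P) \<Longrightarrow> P"
  by (auto simp: in_set_conv_nth)

lemma in_set_idx: "x \<in> set L \<Longrightarrow> \<exists>k<length L. L ! k = x"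
  by (simp add: in_set_conv_nth)

lemma Esof_out_uniq: assumes "invar L F" "(i, k, b) \<in> Esof L F" "(i, k', b) \<in> Esof L F" shows "k = k'"
proof -
  have "(L ! i, L ! k, b) \<in> Es" "(L ! i, L ! k', b) \<in> Es" using assms invD(5)[OF assms(1)] by auto
  then have "L ! k = L ! k'" by (rule out_uniq)
  then show ?thesis using nth_eq_iff_index_eq[OF invD(1)[OF assms(1)]] assms(2,3) by auto
qed

lemma Esof_in_uniq: assumes "invar L F" "(k, i, b) \<in> Esof L F" "(k', i, b) \<in> Esof L F" shows "k = k'"
proof -
  have "(L ! k, L ! i, b) \<in> Es" "(L ! k', L ! i, b) \<in> Es" using assms invD(5)[OF assms(1)] by auto
  then have "L ! k = L ! k'" by (rule in_uniq)
  then show ?thesis using nth_eq_iff_index_eq[OF invD(1)[OF assms(1)]] assms(2,3) by auto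
qed

lemma finite_Eout_Esof: "invar L F \<Longrightarrow> finite (Eout (Esof L F) b i)"
  using finite_Esof[OF invD(5)] unfolding Eout_def by auto
lemma finite_Ein_Esof: "invar L F \<Longrightarrow> finite (Ein (Esof L F) b i)"
  using finite_Esof[OF invD(5)] unfolding Ein_def by auto

lemma card_Eout_le: assumes "invar L F" shows "card (Eout (Esof L F) b i) \<le> 1"
proof (rule card_le1I)
  show "finite (Eout (Esof L F) b i)" using finite_Eout_Esof[OF assms] .
next
  fix p q assume "p \<in> Eout (Esof L F) b i" "q \<in> Eout (Esof L F) b i"
  then obtain k k' where "p = (i, k, b)" "q = (i, k', b)" "(i, k, b) \<in> Esof L F" "(i, k', b) \<in> Esof L F"
    unfolding mem_Eout by blast
  then show "p = q" using Esof_out_uniq[OF assms] by blast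
qed

lemma card_Ein_le: assumes "invar L F" shows "card (Ein (Esof L F) b i) \<le> 1"
proof (rule card_le1I)
  show "finite (Ein (Esof L F) b i)" using finite_Ein_Esof[OF assms] .
next
  fix p q assume "p \<in> Ein (Esof L F) b i" "q \<in> Ein (Esof L F) b i"
  then obtain k k' where "p = (k, i, b)" "q = (k', i, b)" "(k, i, b) \<in> Esof L F" "(k', i, b) \<in> Esof L F"
    unfolding mem_Ein by blast
  then show "p = q" using Esof_in_uniq[OF assms] by blast
qed

lemma Eout_nonempty: assumes "invar L F" "i < length L" "(L ! i, y, b) \<in> F"
  shows "card (Eout (Esof L F) b i) = 1"
proof -
  have "y \<in> set L" using invD(6)[OF assms(1) assms(3)] by simp
  then obtain k where k: "k < length L" "L ! k = y" by (rule idxE)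
  have "(i, k, b) \<in> Eout (Esof L F) b i" using assms k unfolding mem_Eout by auto
  then show ?thesis by (rule card1I[OF finite_Eout_Esof[OF assms(1)] card_Eout_le[OF assms(1)]])
qed

lemma Ein_nonempty: assumes "invar L F" "i < length L" "(y, L ! i, b) \<in> F"
  shows "card (Ein (Esof L F) b i) = 1" "Ein (Esof L F) b i \<noteq> {}"
proof -
  have "y \<in> set L" using invD(6)[OF assms(1) assms(3)] by simp
  then obtain k where k: "k < length L" "L ! k = y" by (rule idxE)
  have m: "(k, i, b) \<in> Ein (Esof L F) b i" using assms k unfolding mem_Ein by auto
  then show "card (Ein (Esof L F) b i) = 1" by (rule card1I[OF finite_Ein_Esof[OF assms(1)] card_Ein_le[OF assms(1)]])
  show "Ein (Esof L F) b i \<noteq> {}" using m by blast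
qed

lemma inv_len: "invar L F \<Longrightarrow> {0..length L - 1} = {i. i < length L}"
  using invD(2) by (cases L) auto

lemma inv_mem_len: assumes "invar L F" shows "v \<in> {0..length L - 1} \<longleftrightarrow> v < length L"
proof -
  have "length L \<ge> 1" using invD(2)[OF assms] by (cases L) auto
  then show ?thesis by auto
qed

lemma inv_idx0: assumes "invar L F" "v < length L" "L ! v = v0" shows "v = 0"
proof -
  have "0 < length L" using invD(2)[OF assms(1)] by simp
  then show ?thesis using nth_eq_iff_index_eq[OF invD(1)[OF assms(1)] assms(2), of 0] assms(3) invD(3)[OF assms(1)] by simp
qed

lemma inv_incomplete: assumes I: "invar L F" shows "incomplete_toom \<sigma> (Vsof Vs L) (Esof L F)"
proof -
  let ?N = "length L - 1"
  have len: "{0..?N} = {i. i < length L}" using inv_len[OF I] .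
  have F: "F \<subseteq> Es" using invD(5)[OF I] .
  have LV: "set L \<subseteq> V" using invD(4)[OF I] .
  have t1: "Vsof Vs L \<subseteq> {0..?N} \<times> vtypes \<sigma>"
  proof
    fix p assume p: "p \<in> Vsof Vs L"
    obtain i a where ia: "p = (i, a)" by (cases p)
    then have "i < length L" "(L ! i, a) \<in> Vs" using p by auto
    then show "p \<in> {0..?N} \<times> vtypes \<sigma>" using ia Vs_sub len by auto
  qed
  have t2: "Esof L F \<subseteq> {0..?N} \<times> {0..?N} \<times> {1..\<sigma>}"
  proof
    fix p assume p: "p \<in> Esof L F"
    obtain i j b where ia: "p = (i, j, b)" by (cases p)
    then have ij: "i < length L" "j < length L" and e: "(L ! i, L ! j, b) \<in> Es" using p F by auto
    have "1 \<le> b \<and> b \<le> \<sigma>" using edgeD[OF e] by blast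
    then show "p \<in> {0..?N} \<times> {0..?N} \<times> {1..\<sigma>}" using ia ij len by auto
  qed
  have t3: "\<forall>v\<in>{0..?N}. \<exists>a. (v, a) \<in> Vsof Vs L"
  proof
    fix v assume "v \<in> {0..?N}"
    then have v: "v < length L" using inv_mem_len[OF I] by blast
    then have "L ! v \<in> set L" by simp
    then have "L ! v \<in> V" using LV by blast
    then obtain a where "(L ! v, a) \<in> Vs" using has_type by blast
    then show "\<exists>a. (v, a) \<in> Vsof Vs L" using v by auto
  qed
  have td: "typed_digraph {0..?N} (vtypes \<sigma>) {1..\<sigma>} (Vsof Vs L) (Esof L F)"
    unfolding typed_digraph_def using t1 t2 t3 by blast
  have P1: "\<exists>N. typed_digraph {0..N} (vtypes \<sigma>) {1..\<sigma>} (Vsof Vs L) (Esof L F) \<and> graph_connected {0..N} (Esof L F)"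
    using td invD(7)[OF I] by blast
  have P2: "(0, Circ) \<in> Vsof Vs L" using invD(2,3)[OF I] v0C' by auto
  have P3: "\<forall>v\<in>Vty (Vsof Vs L) Circ.
        (\<forall>s\<in>{1..\<sigma>}. Ein (Esof L F) s v = {}) \<and> (\<forall>s\<in>{1..\<sigma>}. card (Eout (Esof L F) s v) \<le> 1)"
  proof (intro ballI conjI)
    fix v s assume v: "v \<in> Vty (Vsof Vs L) Circ"
    show "Ein (Esof L F) s v = {}"
    proof (rule ccontr)
      assume ne: "Ein (Esof L F) s v \<noteq> {}"
      obtain k where "(k, v, s) \<in> Esof L F" using Ein_ne[OF ne] by (elim exE)
      then have "(L ! k, L ! v, s) \<in> Es" using F by auto
      then show False using circ_noin[of "L ! v" "L ! k" s] v by auto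
    qed
    show "card (Eout (Esof L F) s v) \<le> 1" by (rule card_Eout_le[OF I])
  qed
  have P4: "\<forall>v\<in>Vty (Vsof Vs L) Star.
        (\<forall>s\<in>{1..\<sigma>}. Eout (Esof L F) s v = {}) \<and> (\<forall>s\<in>{1..\<sigma>}. card (Ein (Esof L F) s v) \<le> 1)"
  proof (intro ballI conjI)
    fix v s assume v: "v \<in> Vty (Vsof Vs L) Star"
    show "Eout (Esof L F) s v = {}"
    proof (rule ccontr)
      assume ne: "Eout (Esof L F) s v \<noteq> {}"
      obtain k where "(v, k, s) \<in> Esof L F" using Eout_ne[OF ne] by (elim exE)
      then have "(L ! v, L ! k, s) \<in> Es" using F by auto
      then show False using star_noout[of "L ! v" "L ! k" s] v by auto
    qed
    show "card (Ein (Esof L F) s v) \<le> 1" by (rule card_Ein_le[OF I])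
  qed
  have P5: "\<forall>s\<in>{1..\<sigma>}. \<forall>v\<in>Vty (Vsof Vs L) (Chg s).
        card (Ein (Esof L F) s v) \<le> 1 \<and> card (Eout (Esof L F) s v) \<le> 1 \<and>
        (\<forall>t\<in>{1..\<sigma>}. t \<noteq> s \<longrightarrow> Ein (Esof L F) t v = {} \<and> Eout (Esof L F) t v = {})"
  proof (intro ballI conjI impI)
    fix s v t assume v: "v \<in> Vty (Vsof Vs L) (Chg s)" and ts: "t \<noteq> s"
    show "Ein (Esof L F) t v = {}"
    proof (rule ccontr)
      assume ne: "Ein (Esof L F) t v \<noteq> {}"
      obtain k where "(k, v, t) \<in> Esof L F" using Ein_ne[OF ne] by (elim exE)
      then have "(L ! k, L ! v, t) \<in> Es" using F by auto
      then show False using chg_in[of "L ! v" s "L ! k" t] v ts by auto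
    qed
    show "Eout (Esof L F) t v = {}"
    proof (rule ccontr)
      assume ne: "Eout (Esof L F) t v \<noteq> {}"
      obtain k where "(v, k, t) \<in> Esof L F" using Eout_ne[OF ne] by (elim exE)
      then have "(L ! v, L ! k, t) \<in> Es" using F by auto
      then show False using chg_out[of "L ! v" s "L ! k" t] v ts by auto
    qed
  qed (use card_Ein_le[OF I] card_Eout_le[OF I] in auto)
  have P6: "(\<forall>v\<in>(Vty (Vsof Vs L) (Chg \<sigma>) \<union> Vty (Vsof Vs L) Circ) - {0}. card (Eout (Esof L F) \<sigma> v) = 1)"
  proof
    fix v assume v: "v \<in> (Vty (Vsof Vs L) (Chg \<sigma>) \<union> Vty (Vsof Vs L) Circ) - {0}"
    then have vl: "v < length L" and ty: "(L ! v, Circ) \<in> Vs \<or> (L ! v, Chg \<sigma>) \<in> Vs" and v0: "v \<noteq> 0" by auto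
    have "L ! v \<noteq> v0" using inv_idx0[OF I vl] v0 by blast
    then obtain y where "(L ! v, y, \<sigma>) \<in> F" using invD(8)[OF I _ _ ty] vl by auto
    then show "card (Eout (Esof L F) \<sigma> v) = 1" using Eout_nonempty[OF I vl] by blast
  qed
  have P7: "\<forall>s\<in>{1..<\<sigma>}. \<forall>v\<in>Vty (Vsof Vs L) (Chg s). card (Ein (Esof L F) s v) = 1"
  proof (intro ballI)
    fix s v assume s: "s \<in> {1..<\<sigma>}" and v: "v \<in> Vty (Vsof Vs L) (Chg s)"
    then have vl: "v < length L" and ty: "(L ! v, Chg s) \<in> Vs" by auto
    obtain y where "(y, L ! v, s) \<in> F" using invD(9)[OF I _ _ _ ty] vl s by auto
    then show "card (Ein (Esof L F) s v) = 1" using Ein_nonempty(1)[OF I vl] by blast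
  qed
  have P8: "\<forall>v\<in>Vty (Vsof Vs L) Star. \<exists>s\<in>{1..<\<sigma>}. Ein (Esof L F) s v \<noteq> {}"
  proof
    fix v assume v: "v \<in> Vty (Vsof Vs L) Star"
    then have vl: "v < length L" and ty: "(L ! v, Star) \<in> Vs" by auto
    obtain y s where ys: "1 \<le> s" "s < \<sigma>" "(y, L ! v, s) \<in> F" using invD(10)[OF I _ ty] vl by auto
    have "Ein (Esof L F) s v \<noteq> {}" using Ein_nonempty(2)[OF I vl ys(3)] .
    then show "\<exists>s\<in>{1..<\<sigma>}. Ein (Esof L F) s v \<noteq> {}" using ys(1,2) by auto
  qed
  show ?thesis unfolding incomplete_toom_def
    using P1 P2 P3 P4 P5 P6 P7 P8 by blast
qed

lemma circ_ne_chg: "(x, Circ) \<in> Vs \<Longrightarrow> (x, Chg b) \<in> Vs \<Longrightarrow> False"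
  using uniq_type by fastforce
lemma circ_ne_star: "(x, Circ) \<in> Vs \<Longrightarrow> (x, Star) \<in> Vs \<Longrightarrow> False"
  using uniq_type by fastforce
lemma star_ne_chg: "(x, Star) \<in> Vs \<Longrightarrow> (x, Chg b) \<in> Vs \<Longrightarrow> False"
  using uniq_type by fastforce

lemma closure_count:
  assumes UV: "U \<subseteq> V" and v0U: "v0 \<in> U" and FE: "F \<subseteq> Es"
    and ends: "\<And>x y b. (x, y, b) \<in> F \<Longrightarrow> x \<in> U \<and> y \<in> U"
    and I4: "\<And>x. x \<in> U \<Longrightarrow> x \<noteq> v0 \<Longrightarrow> (x, Circ) \<in> Vs \<or> (x, Chg \<sigma>) \<in> Vs \<Longrightarrow> \<exists>y. (x, y, \<sigma>) \<in> F"
    and I5: "\<And>x s. x \<in> U \<Longrightarrow> 1 \<le> s \<Longrightarrow> s < \<sigma> \<Longrightarrow> (x, Chg s) \<in> Vs \<Longrightarrow> \<exists>y. (y, x, s) \<in> F"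
    and Ha: "\<And>x s. x \<in> U \<Longrightarrow> 1 \<le> s \<Longrightarrow> s < \<sigma> \<Longrightarrow> (x, Circ) \<in> Vs \<or> (x, Chg s) \<in> Vs \<Longrightarrow> \<exists>y. (x, y, s) \<in> F"
    and Hb: "\<And>x. x \<in> U \<Longrightarrow> (x, Star) \<in> Vs \<or> (x, Chg \<sigma>) \<in> Vs \<Longrightarrow> \<exists>y. (y, x, \<sigma>) \<in> F"
  shows "F = Es"
proof -
  define C where "C = {x\<in>U. (x, Circ) \<in> Vs}"
  define S where "S = {x\<in>U. (x, Star) \<in> Vs}"
  define K where "K b = {x\<in>U. (x, Chg b) \<in> Vs}" for b
  define Fb where "Fb b = {e\<in>F. snd (snd e) = b}" for b
  have finU: "finite U" using UV finV finite_subset by blast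
  have finF: "finite F" using FE finEs finite_subset by blast
  have finC: "finite C" "finite S" "finite (K b)" for b unfolding C_def S_def K_def using finU by auto
  have finFb: "finite (Fb b)" for b unfolding Fb_def using finF by auto
  have Fb_mem: "e \<in> Fb b \<longleftrightarrow> (\<exists>x y. e = (x, y, b) \<and> (x, y, b) \<in> F)" for e b
    unfolding Fb_def by (cases e) auto
  have srcE: "\<exists>y. (x, y, b) \<in> F" if h: "x \<in> fst ` Fb b" for x b
  proof -
    obtain e where e: "e \<in> Fb b" "x = fst e" using h by blast
    obtain x' y where "e = (x', y, b)" "(x', y, b) \<in> F" using e(1) unfolding Fb_mem by blast
    then show ?thesis using e(2) by auto
  qed
  have tgtE: "\<exists>x. (x, y, b) \<in> F" if h: "y \<in> (\<lambda>e. fst (snd e)) ` Fb b" for y b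
  proof -
    obtain e where e: "e \<in> Fb b" "y = fst (snd e)" using h by blast
    obtain x y' where "e = (x, y', b)" "(x, y', b) \<in> F" using e(1) unfolding Fb_mem by blast
    then show ?thesis using e(2) by auto
  qed
  have srcI: "x \<in> fst ` Fb b" if "(x, y, b) \<in> F" for x y b
  proof -
    have "(x, y, b) \<in> Fb b" using that unfolding Fb_mem by blast
    then show ?thesis by force
  qed
  have tgtI: "y \<in> (\<lambda>e. fst (snd e)) ` Fb b" if "(x, y, b) \<in> F" for x y b
  proof -
    have "(x, y, b) \<in> Fb b" using that unfolding Fb_mem by blast
    then show ?thesis by force
  qed
  have inj_src: "inj_on fst (Fb b)" for b
  proof (rule inj_onI)
    fix e1 e2 assume h: "e1 \<in> Fb b" "e2 \<in> Fb b" "fst e1 = fst e2"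
    obtain x y where 1: "e1 = (x, y, b)" "(x, y, b) \<in> F" using h(1) unfolding Fb_mem by blast
    obtain x' y' where 2: "e2 = (x', y', b)" "(x', y', b) \<in> F" using h(2) unfolding Fb_mem by blast
    have xx: "x = x'" using h(3) 1 2 by simp
    have "(x, y, b) \<in> Es" "(x, y', b) \<in> Es" using 1 2 FE xx by auto
    then have "y = y'" by (rule out_uniq)
    then show "e1 = e2" using 1 2 xx by simp
  qed
  have inj_tgt: "inj_on (\<lambda>e. fst (snd e)) (Fb b)" for b
  proof (rule inj_onI)
    fix e1 e2 assume h: "e1 \<in> Fb b" "e2 \<in> Fb b" "fst (snd e1) = fst (snd e2)"
    obtain x y where 1: "e1 = (x, y, b)" "(x, y, b) \<in> F" using h(1) unfolding Fb_mem by blast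
    obtain x' y' where 2: "e2 = (x', y', b)" "(x', y', b) \<in> F" using h(2) unfolding Fb_mem by blast
    have yy: "y = y'" using h(3) 1 2 by simp
    have "(x, y, b) \<in> Es" "(x', y, b) \<in> Es" using 1 2 FE yy by auto
    then have "x = x'" by (rule in_uniq)
    then show "e1 = e2" using 1 2 yy by simp
  qed
  have src_type: "x \<in> C \<or> x \<in> K b" if "(x, y, b) \<in> F" for x y b
  proof -
    have e: "(x, y, b) \<in> Es" using that FE by auto
    have xU: "x \<in> U" using ends[OF that] by blast
    obtain a where a: "(x, a) \<in> Vs" using has_type edgeD[OF e] by blast
    have "a = Circ \<or> a = Chg b" using edge_src_type[OF e a] .
    then show ?thesis using a xU unfolding C_def K_def by auto
  qed
  have tgt_type: "y \<in> S \<or> y \<in> K b" if "(x, y, b) \<in> F" for x y b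
  proof -
    have e: "(x, y, b) \<in> Es" using that FE by auto
    have yU: "y \<in> U" using ends[OF that] by blast
    obtain a where a: "(y, a) \<in> Vs" using has_type edgeD[OF e] by blast
    have "a = Star \<or> a = Chg b" using edge_tgt_type[OF e a] .
    then show ?thesis using a yU unfolding S_def K_def by auto
  qed
  have dCK: "C \<inter> K b = {}" for b unfolding C_def K_def using circ_ne_chg by blast
  have dSK: "S \<inter> K b = {}" for b unfolding S_def K_def using star_ne_chg by blast
  have small: "card C = card (S \<inter> (\<lambda>e. fst (snd e)) ` Fb b)" if b: "1 \<le> b" "b < \<sigma>" for b
  proof -
    have srcim: "fst ` Fb b = C \<union> K b"
    proof
      show "fst ` Fb b \<subseteq> C \<union> K b"
      proof
        fix x assume "x \<in> fst ` Fb b"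
        then obtain y where "(x, y, b) \<in> F" using srcE by blast
        then show "x \<in> C \<union> K b" using src_type by blast
      qed
      show "C \<union> K b \<subseteq> fst ` Fb b"
      proof
        fix x assume x: "x \<in> C \<union> K b"
        then have "x \<in> U" "(x, Circ) \<in> Vs \<or> (x, Chg b) \<in> Vs" unfolding C_def K_def by auto
        then obtain y where "(x, y, b) \<in> F" using Ha b by blast
        then show "x \<in> fst ` Fb b" by (rule srcI)
      qed
    qed
    have tgtim: "(\<lambda>e. fst (snd e)) ` Fb b = K b \<union> (S \<inter> (\<lambda>e. fst (snd e)) ` Fb b)"
    proof
      show "(\<lambda>e. fst (snd e)) ` Fb b \<subseteq> K b \<union> (S \<inter> (\<lambda>e. fst (snd e)) ` Fb b)"
      proof
        fix y assume y: "y \<in> (\<lambda>e. fst (snd e)) ` Fb b"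
        then obtain x where "(x, y, b) \<in> F" using tgtE by blast
        then show "y \<in> K b \<union> (S \<inter> (\<lambda>e. fst (snd e)) ` Fb b)" using tgt_type y by blast
      qed
      show "K b \<union> (S \<inter> (\<lambda>e. fst (snd e)) ` Fb b) \<subseteq> (\<lambda>e. fst (snd e)) ` Fb b"
      proof
        fix y assume y: "y \<in> K b \<union> (S \<inter> (\<lambda>e. fst (snd e)) ` Fb b)"
        show "y \<in> (\<lambda>e. fst (snd e)) ` Fb b"
        proof (cases "y \<in> K b")
          case True
          then have "y \<in> U" "(y, Chg b) \<in> Vs" unfolding K_def by auto
          then obtain x where "(x, y, b) \<in> F" using I5 b by blast
          then show ?thesis by (rule tgtI)
        next
          case False then show ?thesis using y by blast
        qed
      qed
    qed
    have "card (Fb b) = card (C \<union> K b)" using card_image[OF inj_src] srcim by metis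
    also have "\<dots> = card C + card (K b)" using card_Un_disjoint[OF finC(1) finC(3) dCK] .
    finally have c1: "card (Fb b) = card C + card (K b)" .
    have "card (Fb b) = card (K b \<union> (S \<inter> (\<lambda>e. fst (snd e)) ` Fb b))" using card_image[OF inj_tgt] tgtim by metis
    also have "\<dots> = card (K b) + card (S \<inter> (\<lambda>e. fst (snd e)) ` Fb b)"
      by (rule card_Un_disjoint) (use finC dSK in auto)
    finally show ?thesis using c1 by simp
  qed
  have big: "card S = card (C \<inter> fst ` Fb \<sigma>)"
  proof -
    have tgtim: "(\<lambda>e. fst (snd e)) ` Fb \<sigma> = S \<union> K \<sigma>"
    proof
      show "(\<lambda>e. fst (snd e)) ` Fb \<sigma> \<subseteq> S \<union> K \<sigma>"
      proof
        fix y assume "y \<in> (\<lambda>e. fst (snd e)) ` Fb \<sigma>"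
        then obtain x where "(x, y, \<sigma>) \<in> F" using tgtE by blast
        then show "y \<in> S \<union> K \<sigma>" using tgt_type by blast
      qed
      show "S \<union> K \<sigma> \<subseteq> (\<lambda>e. fst (snd e)) ` Fb \<sigma>"
      proof
        fix y assume y: "y \<in> S \<union> K \<sigma>"
        then have "y \<in> U" "(y, Star) \<in> Vs \<or> (y, Chg \<sigma>) \<in> Vs" unfolding S_def K_def by auto
        then obtain x where "(x, y, \<sigma>) \<in> F" using Hb by blast
        then show "y \<in> (\<lambda>e. fst (snd e)) ` Fb \<sigma>" by (rule tgtI)
      qed
    qed
    have srcim: "fst ` Fb \<sigma> = K \<sigma> \<union> (C \<inter> fst ` Fb \<sigma>)"
    proof
      show "fst ` Fb \<sigma> \<subseteq> K \<sigma> \<union> (C \<inter> fst ` Fb \<sigma>)"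
      proof
        fix x assume x: "x \<in> fst ` Fb \<sigma>"
        then obtain y where "(x, y, \<sigma>) \<in> F" using srcE by blast
        then show "x \<in> K \<sigma> \<union> (C \<inter> fst ` Fb \<sigma>)" using src_type x by blast
      qed
      show "K \<sigma> \<union> (C \<inter> fst ` Fb \<sigma>) \<subseteq> fst ` Fb \<sigma>"
      proof
        fix x assume x: "x \<in> K \<sigma> \<union> (C \<inter> fst ` Fb \<sigma>)"
        show "x \<in> fst ` Fb \<sigma>"
        proof (cases "x \<in> K \<sigma>")
          case True
          then have xU: "x \<in> U" and xc: "(x, Chg \<sigma>) \<in> Vs" unfolding K_def by auto
          have "x \<noteq> v0" using xc v0C' circ_ne_chg by blast
          then obtain y where "(x, y, \<sigma>) \<in> F" using I4 xU xc by blast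
          then show ?thesis by (rule srcI)
        next
          case False then show ?thesis using x by blast
        qed
      qed
    qed
    have "card (Fb \<sigma>) = card (S \<union> K \<sigma>)" using card_image[OF inj_tgt] tgtim by metis
    also have "\<dots> = card S + card (K \<sigma>)" using card_Un_disjoint[OF finC(2) finC(3) dSK] .
    finally have c1: "card (Fb \<sigma>) = card S + card (K \<sigma>)" .
    have "card (Fb \<sigma>) = card (K \<sigma> \<union> (C \<inter> fst ` Fb \<sigma>))" using card_image[OF inj_src] srcim by metis
    also have "\<dots> = card (K \<sigma>) + card (C \<inter> fst ` Fb \<sigma>)"
      by (rule card_Un_disjoint) (use finC dCK in auto)
    finally show ?thesis using c1 by simp
  qed
  have le1: "card C \<le> card S"
  proof -
    have "card C = card (S \<inter> (\<lambda>e. fst (snd e)) ` Fb 1)" using small[of 1] sig by simp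
    also have "\<dots> \<le> card S" by (rule card_mono) (use finC in auto)
    finally show ?thesis .
  qed
  have le2: "card S \<le> card C"
  proof -
    have "card (C \<inter> fst ` Fb \<sigma>) \<le> card C" by (rule card_mono) (use finC in auto)
    then show ?thesis using big by simp
  qed
  have Csub: "C \<subseteq> fst ` Fb \<sigma>"
  proof -
    have "C \<inter> fst ` Fb \<sigma> = C"
      by (rule card_subset_eq) (use finC big le1 le2 in auto)
    then show ?thesis by blast
  qed
  have Ssub: "S \<subseteq> (\<lambda>e. fst (snd e)) ` Fb b" if "1 \<le> b" "b < \<sigma>" for b
  proof -
    have "S \<inter> (\<lambda>e. fst (snd e)) ` Fb b = S"
      by (rule card_subset_eq) (use finC small[OF that] le1 le2 in auto)
    then show ?thesis by blast
  qed
  have outF: "(x, y, b) \<in> F" if e: "(x, y, b) \<in> Es" and xU: "x \<in> U" for x y b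
  proof -
    have b: "1 \<le> b" "b \<le> \<sigma>" using edgeD[OF e] by auto
    obtain a where a: "(x, a) \<in> Vs" using has_type edgeD[OF e] by blast
    have ty: "a = Circ \<or> a = Chg b" using edge_src_type[OF e a] .
    show ?thesis
    proof (cases "b < \<sigma>")
      case True
      obtain y' where "(x, y', b) \<in> F" using Ha[OF xU b(1) True] ty a by blast
      moreover then have "y' = y" using out_uniq[OF _ e] FE by blast
      ultimately show ?thesis by simp
    next
      case False
      then have bs: "b = \<sigma>" using b by simp
      show ?thesis
      proof (cases "a = Circ")
        case True
        then have "x \<in> C" using a xU unfolding C_def by simp
        then obtain y' where "(x, y', \<sigma>) \<in> F" using Csub srcE by blast
        moreover then have "y' = y" using out_uniq[OF _ e] FE bs by blast
        ultimately show ?thesis using bs by simp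
      next
        case False
        then have xc: "(x, Chg \<sigma>) \<in> Vs" using ty a bs by simp
        have "x \<noteq> v0" using xc v0C' circ_ne_chg by blast
        then obtain y' where "(x, y', \<sigma>) \<in> F" using I4 xU xc by blast
        moreover then have "y' = y" using out_uniq[OF _ e] FE bs by blast
        ultimately show ?thesis using bs by simp
      qed
    qed
  qed
  have inF: "(x, y, b) \<in> F" if e: "(x, y, b) \<in> Es" and yU: "y \<in> U" for x y b
  proof -
    have b: "1 \<le> b" "b \<le> \<sigma>" using edgeD[OF e] by auto
    obtain a where a: "(y, a) \<in> Vs" using has_type edgeD[OF e] by blast
    have ty: "a = Star \<or> a = Chg b" using edge_tgt_type[OF e a] .
    show ?thesis
    proof (cases "b < \<sigma>")
      case True
      show ?thesis
      proof (cases "a = Star")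
        case True
        then have "y \<in> S" using a yU unfolding S_def by simp
        then obtain x' where "(x', y, b) \<in> F" using Ssub[OF b(1) \<open>b < \<sigma>\<close>] tgtE by blast
        moreover then have "x' = x" using in_uniq[OF _ e] FE by blast
        ultimately show ?thesis by simp
      next
        case False
        then have "(y, Chg b) \<in> Vs" using ty a by simp
        then obtain x' where "(x', y, b) \<in> F" using I5[OF yU b(1) True] by blast
        moreover then have "x' = x" using in_uniq[OF _ e] FE by blast
        ultimately show ?thesis by simp
      qed
    next
      case False
      then have bs: "b = \<sigma>" using b by simp
      then obtain x' where "(x', y, \<sigma>) \<in> F" using Hb[OF yU] ty a by blast
      moreover then have "x' = x" using in_uniq[OF _ e] FE bs by blast
      ultimately show ?thesis using bs by simp
    qed
  qed
  have closed: "q \<in> U" if h: "(p, q) \<in> adjr Es" "p \<in> U" for p q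
  proof -
    obtain b where "(p, q, b) \<in> Es \<or> (q, p, b) \<in> Es" using h(1) adjr_iff by metis
    then show ?thesis
    proof
      assume "(p, q, b) \<in> Es"
      then have "(p, q, b) \<in> F" using outF h(2) by blast
      then show ?thesis using ends by blast
    next
      assume "(q, p, b) \<in> Es"
      then have "(q, p, b) \<in> F" using inF h(2) by blast
      then show ?thesis using ends by blast
    qed
  qed
  have VU: "V \<subseteq> U"
  proof
    fix x assume "x \<in> V"
    then have "(v0, x) \<in> (adjr Es)\<^sup>*" using gcD[OF conn v0V] by blast
    then show "x \<in> U" using reach_closed[of v0 x Es U] v0U closed by blast
  qed
  have "Es \<subseteq> F"
  proof
    fix e assume e: "e \<in> Es"
    obtain x y b where xyb: "e = (x, y, b)" by (cases e)
    then have "x \<in> U" using e edgeD VU by blast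
    then show "e \<in> F" using outF e xyb by blast
  qed
  then show ?thesis using FE by blast
qed

lemma Eout_empty_iff: assumes I: "invar L F" and v: "v < length L"
  shows "Eout (Esof L F) s v = {} \<longleftrightarrow> (\<forall>y. (L ! v, y, s) \<notin> F)"
proof
  assume em: "Eout (Esof L F) s v = {}"
  show "\<forall>y. (L ! v, y, s) \<notin> F"
  proof (intro allI notI)
    fix y assume yF: "(L ! v, y, s) \<in> F"
    have "y \<in> set L" using invD(6)[OF I yF] by simp
    then obtain k where k: "k < length L" "L ! k = y" by (rule idxE)
    have "(v, k, s) \<in> Eout (Esof L F) s v" using v k yF unfolding mem_Eout by auto
    then show False using em by blast
  qed
next
  assume h: "\<forall>y. (L ! v, y, s) \<notin> F"
  show "Eout (Esof L F) s v = {}"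
  proof (rule ccontr)
    assume ne: "Eout (Esof L F) s v \<noteq> {}"
    obtain k where "(v, k, s) \<in> Esof L F" using Eout_ne[OF ne] by (elim exE)
    then have "(L ! v, L ! k, s) \<in> F" by simp
    then show False using h by blast
  qed
qed

lemma Ein_empty_iff: assumes I: "invar L F" and v: "v < length L"
  shows "Ein (Esof L F) s v = {} \<longleftrightarrow> (\<forall>y. (y, L ! v, s) \<notin> F)"
proof
  assume em: "Ein (Esof L F) s v = {}"
  show "\<forall>y. (y, L ! v, s) \<notin> F"
  proof (intro allI notI)
    fix y assume yF: "(y, L ! v, s) \<in> F"
    have "y \<in> set L" using invD(6)[OF I yF] by simp
    then obtain k where k: "k < length L" "L ! k = y" by (rule idxE)
    have "(k, v, s) \<in> Ein (Esof L F) s v" using v k yF unfolding mem_Ein by auto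
    then show False using em by blast
  qed
next
  assume h: "\<forall>y. (y, L ! v, s) \<notin> F"
  show "Ein (Esof L F) s v = {}"
  proof (rule ccontr)
    assume ne: "Ein (Esof L F) s v \<noteq> {}"
    obtain k where "(k, v, s) \<in> Esof L F" using Ein_ne[OF ne] by (elim exE)
    then have "(L ! k, L ! v, s) \<in> F" by simp
    then show False using h by blast
  qed
qed

lemma loose_T: assumes I: "invar L F" and le: "loose_end \<sigma> (Vsof Vs L) (Esof L F) (v, s)"
  shows "v < length L \<and> ((((L ! v, Circ) \<in> Vs \<or> (L ! v, Chg s) \<in> Vs) \<and> 1 \<le> s \<and> s < \<sigma> \<and> (\<forall>y. (L ! v, y, s) \<notin> F)) \<or>
     (((L ! v, Star) \<in> Vs \<or> (L ! v, Chg \<sigma>) \<in> Vs) \<and> s = \<sigma> \<and> (\<forall>y. (y, L ! v, \<sigma>) \<notin> F)))"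
proof -
  have le': "(v \<in> Vty (Vsof Vs L) Circ \<union> Vty (Vsof Vs L) (Chg s) \<and> 1 \<le> s \<and> s < \<sigma> \<and> Eout (Esof L F) s v = {}) \<or>
     (v \<in> Vty (Vsof Vs L) Star \<union> Vty (Vsof Vs L) (Chg \<sigma>) \<and> s = \<sigma> \<and> Ein (Esof L F) \<sigma> v = {})"
    using le unfolding loose_end_def by simp
  then show ?thesis
  proof
    assume h: "v \<in> Vty (Vsof Vs L) Circ \<union> Vty (Vsof Vs L) (Chg s) \<and> 1 \<le> s \<and> s < \<sigma> \<and> Eout (Esof L F) s v = {}"
    then have v: "v < length L" by auto
    then show ?thesis using h Eout_empty_iff[OF I v] by auto
  next
    assume h: "v \<in> Vty (Vsof Vs L) Star \<union> Vty (Vsof Vs L) (Chg \<sigma>) \<and> s = \<sigma> \<and> Ein (Esof L F) \<sigma> v = {}"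
    then have v: "v < length L" by auto
    then show ?thesis using h Ein_empty_iff[OF I v] by auto
  qed
qed

lemma loose_I1: assumes I: "invar L F" and v: "v < length L" and ty: "(L ! v, Circ) \<in> Vs \<or> (L ! v, Chg s) \<in> Vs"
  and s: "1 \<le> s" "s < \<sigma>" and h: "\<forall>y. (L ! v, y, s) \<notin> F"
  shows "loose_end \<sigma> (Vsof Vs L) (Esof L F) (v, s)"
proof -
  have "Eout (Esof L F) s v = {}" using Eout_empty_iff[OF I v] h by blast
  then show ?thesis unfolding loose_end_def using v ty s by auto
qed

lemma loose_I2: assumes I: "invar L F" and v: "v < length L" and ty: "(L ! v, Star) \<in> Vs \<or> (L ! v, Chg \<sigma>) \<in> Vs"
  and h: "\<forall>y. (y, L ! v, \<sigma>) \<notin> F"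
  shows "loose_end \<sigma> (Vsof Vs L) (Esof L F) (v, \<sigma>)"
proof -
  have "Ein (Esof L F) \<sigma> v = {}" using Ein_empty_iff[OF I v] h by blast
  then show ?thesis unfolding loose_end_def using v ty by auto
qed

lemma nostuck: assumes I: "invar L F" and ne: "F \<noteq> Es"
  shows "\<exists>le. loose_end \<sigma> (Vsof Vs L) (Esof L F) le"
proof (rule ccontr)
  assume nl: "\<not> (\<exists>le. loose_end \<sigma> (Vsof Vs L) (Esof L F) le)"
  have Ha: "\<exists>y. (x, y, s) \<in> F" if h: "x \<in> set L" "1 \<le> s" "s < \<sigma>" "(x, Circ) \<in> Vs \<or> (x, Chg s) \<in> Vs" for x s
  proof (rule ccontr)
    assume nn: "\<not> (\<exists>y. (x, y, s) \<in> F)"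
    obtain k where k: "k < length L" "L ! k = x" using h(1) by (rule idxE)
    have "loose_end \<sigma> (Vsof Vs L) (Esof L F) (k, s)"
      by (rule loose_I1[OF I k(1)]) (use h k nn in auto)
    then show False using nl by blast
  qed
  have Hb: "\<exists>y. (y, x, \<sigma>) \<in> F" if h: "x \<in> set L" "(x, Star) \<in> Vs \<or> (x, Chg \<sigma>) \<in> Vs" for x
  proof (rule ccontr)
    assume nn: "\<not> (\<exists>y. (y, x, \<sigma>) \<in> F)"
    obtain k where k: "k < length L" "L ! k = x" using h(1) by (rule idxE)
    have "loose_end \<sigma> (Vsof Vs L) (Esof L F) (k, \<sigma>)"
      by (rule loose_I2[OF I k(1)]) (use h k nn in auto)
    then show False using nl by blast
  qed
  have v0L: "v0 \<in> set L" using invD(2,3)[OF I] by (metis length_greater_0_conv nth_mem)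
  have "F = Es"
    by (rule closure_count[OF invD(4)[OF I] v0L invD(5)[OF I] invD(6)[OF I] invD(8)[OF I] invD(9)[OF I] Ha Hb])
  then show False using ne by blast
qed

lemma gc_add: assumes g: "graph_connected A E" and EE: "E \<subseteq> E'" and a: "a \<in> A" and ax: "(a, x) \<in> adjr E'"
  shows "graph_connected (insert x A) E'"
proof -
  have mono: "adjr E \<subseteq> adjr E'" using EE unfolding adjr_def by auto
  have xa: "(x, a) \<in> adjr E'" using ax unfolding adjr_def by auto
  have old: "(p, q) \<in> (adjr E')\<^sup>*" if "p \<in> A" "q \<in> A" for p q
    using gcD[OF g that] rtrancl_mono[OF mono] by blast
  show ?thesis unfolding gc_def2
  proof (intro ballI)
    fix p q assume p: "p \<in> insert x A" and q: "q \<in> insert x A"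
    show "(p, q) \<in> (adjr E')\<^sup>*"
    proof (cases "p = x")
      case True
      show ?thesis
      proof (cases "q = x")
        case True then show ?thesis using \<open>p = x\<close> by simp
      next
        case False
        then have "q \<in> A" using q by simp
        then have "(a, q) \<in> (adjr E')\<^sup>*" using old a by blast
        then show ?thesis using xa \<open>p = x\<close> converse_rtrancl_into_rtrancl by metis
      qed
    next
      case False
      then have pA: "p \<in> A" using p by simp
      show ?thesis
      proof (cases "q = x")
        case True
        have "(p, a) \<in> (adjr E')\<^sup>*" using old a pA by blast
        then show ?thesis using ax True rtrancl_into_rtrancl by metis
      next
        case False
        then have "q \<in> A" using q by simp
        then show ?thesis using old pA by blast
      qed
    qed
  qed
qed

lemma mu_exists: assumes "loose_end \<sigma>' A B le" shows "\<exists>le'. most_urgent_loose_end \<sigma>' A B le'"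
proof -
  define s0 where "s0 = (LEAST s. \<exists>v. loose_end \<sigma>' A B (v, s))"
  have ex: "\<exists>s v. loose_end \<sigma>' A B (v, s)" using assms by (cases le) auto
  have s0: "\<exists>v. loose_end \<sigma>' A B (v, s0)" unfolding s0_def by (rule LeastI_ex[OF ex])
  define v1 where "v1 = (LEAST v. loose_end \<sigma>' A B (v, s0))"
  have v1: "loose_end \<sigma>' A B (v1, s0)" unfolding v1_def using s0 by (rule LeastI_ex)
  have "most_urgent_loose_end \<sigma>' A B (v1, s0)"
    unfolding most_urgent_loose_end_def
  proof (intro conjI allI impI)
    show "loose_end \<sigma>' A B (v1, s0)" by (rule v1)
    fix v' s' assume h: "loose_end \<sigma>' A B (v', s')"
    have "s0 \<le> s'" unfolding s0_def using h by (metis (mono_tags, lifting) Least_le)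
    moreover have "s0 = s' \<Longrightarrow> v1 \<le> v'" unfolding v1_def using h by (metis (mono_tags, lifting) Least_le)
    ultimately show "snd (v1, s0) < s' \<or> snd (v1, s0) = s' \<and> fst (v1, s0) \<le> v'" by auto
  qed
  then show ?thesis by blast
qed

lemma mu_unique: assumes "most_urgent_loose_end \<sigma>' A B le" "most_urgent_loose_end \<sigma>' A B le'" shows "le = le'"
proof -
  obtain v s v' s' where e: "le = (v, s)" "le' = (v', s')" by (cases le, cases le') auto
  have l: "loose_end \<sigma>' A B (v, s)" "loose_end \<sigma>' A B (v', s')" using assms e unfolding most_urgent_loose_end_def by auto
  have "s < s' \<or> (s = s' \<and> v \<le> v')" using assms(1) l(2) e unfolding most_urgent_loose_end_def by auto
  moreover have "s' < s \<or> (s' = s \<and> v' \<le> v)" using assms(2) l(1) e unfolding most_urgent_loose_end_def by auto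
  ultimately show ?thesis using e by auto
qed

lemma add_edge:
  assumes I: "invar L F" and v: "v < length L"
    and ed: "ed = (if d then (L ! v, y, b) else (y, L ! v, b))"
    and edEs: "ed \<in> Es" and edF: "ed \<notin> F"
    and c4: "y \<noteq> v0 \<Longrightarrow> (y, Circ) \<in> Vs \<or> (y, Chg \<sigma>) \<in> Vs \<Longrightarrow> \<exists>z. (y, z, \<sigma>) \<in> insert ed F"
    and c5: "\<And>t. 1 \<le> t \<Longrightarrow> t < \<sigma> \<Longrightarrow> (y, Chg t) \<in> Vs \<Longrightarrow> \<exists>z. (z, y, t) \<in> insert ed F"
    and c6: "(y, Star) \<in> Vs \<Longrightarrow> \<exists>z t. 1 \<le> t \<and> t < \<sigma> \<and> (z, y, t) \<in> insert ed F"
    and L': "L' = (if y \<in> set L then L else L @ [y])" and F': "F' = insert ed F"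
  shows "invar L' F' \<and> card F' = Suc (card F) \<and> Vsof Vs L \<subseteq> Vsof Vs L' \<and>
     (\<exists>j. Esof L' F' = insert (if d then (v, j, b) else (j, v, b)) (Esof L F) \<and>
          (if d then (v, j, b) else (j, v, b)) \<notin> Esof L F)"
proof -
  have yV: "y \<in> V" using edEs ed edgeD by (cases d) auto
  have dL: "distinct L" and LV: "set L \<subseteq> V" and FE: "F \<subseteq> Es" and Lne: "L \<noteq> []"
    using invD(1,2,4,5)[OF I] by auto
  have pre: "L' ! i = L ! i" if "i < length L" for i using that L' by (auto simp: nth_append)
  have lenL': "length L \<le> length L'" using L' by auto
  have dL': "distinct L'" using dL L' by auto
  have setL': "set L' = insert y (set L)" using L' by auto
  have backL: "i < length L" if "i < length L'" "L' ! i \<in> set L" for i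
  proof (cases "y \<in> set L")
    case True then show ?thesis using that L' by simp
  next
    case False
    then have L'e: "L' = L @ [y]" using L' by simp
    show ?thesis
    proof (rule ccontr)
      assume "\<not> i < length L"
      then have "i = length L" using that(1) L'e by simp
      then have "L' ! i = y" using L'e by simp
      then show False using that(2) False by simp
    qed
  qed
  obtain j where j: "j < length L'" "L' ! j = y" and jA: "j < length L \<or> (j = length L \<and> L' = L @ [y])"
  proof (cases "y \<in> set L")
    case True
    then obtain k where "k < length L" "L ! k = y" by (rule idxE)
    then show ?thesis using that[of k] L' True by simp
  next
    case False
    then show ?thesis using that[of "length L"] L' by simp
  qed
  have vL': "v < length L'" using v lenL' by simp
  have xv: "L' ! v = L ! v" using pre v by simp
  have FE': "F' \<subseteq> Es" using FE edEs F' by simp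
  have ends': "x \<in> set L' \<and> z \<in> set L'" if "(x, z, c) \<in> F'" for x z c
  proof (cases "(x, z, c) = ed")
    case True
    have "L ! v \<in> set L" using v by simp
    then show ?thesis using True ed setL' by (cases d) auto
  next
    case False
    then have "(x, z, c) \<in> F" using that F' by simp
    then show ?thesis using invD(6)[OF I] setL' by blast
  qed
  let ?e = "if d then (v, j, b) else (j, v, b)"
  have EsofEq: "Esof L' F' = insert ?e (Esof L F)"
  proof
    show "Esof L' F' \<subseteq> insert ?e (Esof L F)"
    proof
      fix p assume p: "p \<in> Esof L' F'"
      obtain i k c where ikc: "p = (i, k, c)" by (cases p)
      then have ik: "i < length L'" "k < length L'" and inF: "(L' ! i, L' ! k, c) \<in> F'" using p by auto
      show "p \<in> insert ?e (Esof L F)"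
      proof (cases "(L' ! i, L' ! k, c) = ed")
        case True
        show ?thesis
        proof (cases d)
          case dT: True
          then have "L' ! i = L' ! v" "L' ! k = L' ! j" "c = b" using True ed xv j by auto
          then have "i = v" "k = j" using nth_eq_iff_index_eq[OF dL'] ik vL' j(1) by auto
          then show ?thesis using ikc dT \<open>c = b\<close> by simp
        next
          case dF: False
          then have "L' ! i = L' ! j" "L' ! k = L' ! v" "c = b" using True ed xv j by auto
          then have "i = j" "k = v" using nth_eq_iff_index_eq[OF dL'] ik vL' j(1) by auto
          then show ?thesis using ikc dF \<open>c = b\<close> by simp
        qed
      next
        case False
        then have F0: "(L' ! i, L' ! k, c) \<in> F" using inF F' by simp
        then have "L' ! i \<in> set L" "L' ! k \<in> set L" using invD(6)[OF I] by blast+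
        then have il: "i < length L" and kl: "k < length L" using backL ik by auto
        then have "(L ! i, L ! k, c) \<in> F" using F0 pre by simp
        then show ?thesis using ikc il kl by simp
      qed
    qed
    show "insert ?e (Esof L F) \<subseteq> Esof L' F'"
    proof
      fix p assume p: "p \<in> insert ?e (Esof L F)"
      show "p \<in> Esof L' F'"
      proof (cases "p = ?e")
        case True
        have "ed \<in> F'" using F' by simp
        then show ?thesis using True ed j vL' xv by (cases d) auto
      next
        case False
        then have pE: "p \<in> Esof L F" using p by simp
        obtain i k c where ikc: "p = (i, k, c)" by (cases p)
        then have ik: "i < length L" "k < length L" and inF: "(L ! i, L ! k, c) \<in> F" using pE by auto
        then show ?thesis using ikc pre lenL' F' by auto
      qed
    qed
  qed
  have eNot: "?e \<notin> Esof L F"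
  proof
    assume h: "?e \<in> Esof L F"
    then have jl: "j < length L" by (cases d) auto
    then have "L ! j = y" using pre j by simp
    then have "ed \<in> F" using h ed v jl by (cases d) auto
    then show False using edF by simp
  qed
  have conn': "graph_connected {0..length L' - 1} (Esof L' F')"
  proof -
    have g: "graph_connected {0..length L - 1} (Esof L F)" using invD(7)[OF I] .
    have sub: "Esof L F \<subseteq> Esof L' F'" using EsofEq by blast
    have vA: "v \<in> {0..length L - 1}" using v by simp
    have adj: "(v, j) \<in> adjr (Esof L' F')" unfolding adjr_iff using EsofEq by (cases d) auto
    have gi: "graph_connected (insert j {0..length L - 1}) (Esof L' F')" by (rule gc_add[OF g sub vA adj])
    have "insert j {0..length L - 1} = {0..length L' - 1}"
    proof -
      have l1: "length L \<ge> 1" using Lne by (cases L) auto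
      show ?thesis
      proof (cases "j < length L")
        case True
        then have "L ! j = y" using pre j by simp
        then have "y \<in> set L" using True by (metis nth_mem)
        then have "L' = L" using L' by simp
        then show ?thesis using True l1 by auto
      next
        case False
        then have "j = length L" "L' = L @ [y]" using jA by auto
        then show ?thesis using l1 by auto
      qed
    qed
    then show ?thesis using gi by simp
  qed
  have inv': "invar L' F'"
    unfolding invar_def
  proof (intro conjI)
    show "distinct L'" by (rule dL')
    show "L' \<noteq> []" using L' Lne by auto
    show "L' ! 0 = v0" using pre[of 0] Lne invD(3)[OF I] by (cases L) auto
    show "set L' \<subseteq> V" using setL' LV yV by auto
    show "F' \<subseteq> Es" by (rule FE')
    show "\<forall>x z c. (x, z, c) \<in> F' \<longrightarrow> x \<in> set L' \<and> z \<in> set L'" using ends' by blast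
    show "graph_connected {0..length L' - 1} (Esof L' F')" by (rule conn')
    show "\<forall>x\<in>set L'. x \<noteq> v0 \<longrightarrow> (x, Circ) \<in> Vs \<or> (x, Chg \<sigma>) \<in> Vs \<longrightarrow> (\<exists>z. (x, z, \<sigma>) \<in> F')"
    proof (intro ballI impI)
      fix x assume x: "x \<in> set L'" "x \<noteq> v0" "(x, Circ) \<in> Vs \<or> (x, Chg \<sigma>) \<in> Vs"
      show "\<exists>z. (x, z, \<sigma>) \<in> F'"
      proof (cases "x = y")
        case True then show ?thesis using c4 x F' by simp
      next
        case False
        then have "x \<in> set L" using x setL' by simp
        then obtain z where "(x, z, \<sigma>) \<in> F" using invD(8)[OF I] x by blast
        then show ?thesis using F' by blast
      qed
    qed
    show "\<forall>x\<in>set L'. \<forall>t. 1 \<le> t \<longrightarrow> t < \<sigma> \<longrightarrow> (x, Chg t) \<in> Vs \<longrightarrow> (\<exists>z. (z, x, t) \<in> F')"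
    proof (intro ballI allI impI)
      fix x t assume x: "x \<in> set L'" "1 \<le> t" "t < \<sigma>" "(x, Chg t) \<in> Vs"
      show "\<exists>z. (z, x, t) \<in> F'"
      proof (cases "x = y")
        case True then show ?thesis using c5 x F' by simp
      next
        case False
        then have "x \<in> set L" using x setL' by simp
        then obtain z where "(z, x, t) \<in> F" using invD(9)[OF I] x by blast
        then show ?thesis using F' by blast
      qed
    qed
    show "\<forall>x\<in>set L'. (x, Star) \<in> Vs \<longrightarrow> (\<exists>z t. 1 \<le> t \<and> t < \<sigma> \<and> (z, x, t) \<in> F')"
    proof (intro ballI impI)
      fix x assume x: "x \<in> set L'" "(x, Star) \<in> Vs"
      show "\<exists>z t. 1 \<le> t \<and> t < \<sigma> \<and> (z, x, t) \<in> F'"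
      proof (cases "x = y")
        case True then show ?thesis using c6 x F' by simp
      next
        case False
        then have "x \<in> set L" using x setL' by simp
        then obtain z t where "1 \<le> t" "t < \<sigma>" "(z, x, t) \<in> F" using invD(10)[OF I] x by blast
        then show ?thesis using F' by blast
      qed
    qed
  qed
  have cardF: "card F' = Suc (card F)"
  proof -
    have "finite F" using FE finEs finite_subset by blast
    then show ?thesis using F' edF by simp
  qed
  have VsSub: "Vsof Vs L \<subseteq> Vsof Vs L'"
  proof
    fix p assume p: "p \<in> Vsof Vs L"
    obtain i a where ia: "p = (i, a)" by (cases p)
    then show "p \<in> Vsof Vs L'" using p pre lenL' by auto
  qed
  show ?thesis using inv' cardF VsSub EsofEq eNot by blast
qed

lemma ext_iff: "extension_at \<sigma>' (A, B) (v, s) (A', B') \<longleftrightarrow>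
   incomplete_toom \<sigma>' A' B' \<and> A \<subseteq> A' \<and> B \<subseteq> B' \<and> (\<exists>w. B' - B = {if s < \<sigma>' then (v, w, s) else (w, v, \<sigma>')})"
  unfolding extension_at_def by simp

lemma step_main: assumes I: "invar L F" and ne: "F \<noteq> Es" and le: "loose_end \<sigma> (Vsof Vs L) (Esof L F) (v, s)"
  shows "\<exists>L' F'. invar L' F' \<and> card F' = Suc (card F) \<and>
           extension_at \<sigma> (Vsof Vs L, Esof L F) (v, s) (Vsof Vs L', Esof L' F')"
proof -
  have Esne: "Es \<noteq> {}" using ne invD(5)[OF I] by auto
  have lt: "v < length L" and cs: "(((L ! v, Circ) \<in> Vs \<or> (L ! v, Chg s) \<in> Vs) \<and> 1 \<le> s \<and> s < \<sigma> \<and> (\<forall>y. (L ! v, y, s) \<notin> F)) \<or>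
     (((L ! v, Star) \<in> Vs \<or> (L ! v, Chg \<sigma>) \<in> Vs) \<and> s = \<sigma> \<and> (\<forall>y. (y, L ! v, \<sigma>) \<notin> F))"
    using loose_T[OF I le] by auto
  let ?x = "L ! v"
  from cs show ?thesis
  proof
    assume h: "((?x, Circ) \<in> Vs \<or> (?x, Chg s) \<in> Vs) \<and> 1 \<le> s \<and> s < \<sigma> \<and> (\<forall>y. (?x, y, s) \<notin> F)"
    then have s1: "1 \<le> s" and s2: "s < \<sigma>" and nF: "\<forall>y. (?x, y, s) \<notin> F" by auto
    obtain y where e: "(?x, y, s) \<in> Es"
    proof -
      from h have "(?x, Circ) \<in> Vs \<or> (?x, Chg s) \<in> Vs" by simp
      then show ?thesis
      proof
        assume "(?x, Circ) \<in> Vs"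
        then show ?thesis using circ_out_ex[OF Esne _ s1] s2 that by fastforce
      next
        assume "(?x, Chg s) \<in> Vs"
        then show ?thesis using chg_out_ex that by blast
      qed
    qed
    define ed where "ed = (?x, y, s)"
    define L' where "L' = (if y \<in> set L then L else L @ [y])"
    define F' where "F' = insert ed F"
    have edd: "ed = (if True then (?x, y, s) else (y, ?x, s))" using ed_def by simp
    have c4: "\<exists>z. (y, z, \<sigma>) \<in> insert ed F" if "y \<noteq> v0" "(y, Circ) \<in> Vs \<or> (y, Chg \<sigma>) \<in> Vs"
    proof -
      have False using that(2)
      proof
        assume "(y, Circ) \<in> Vs" then show False using circ_noin e by blast
      next
        assume "(y, Chg \<sigma>) \<in> Vs" then have "s = \<sigma>" using chg_in e by blast
        then show False using s2 by simp
      qed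
      then show ?thesis by blast
    qed
    have c5: "\<exists>z. (z, y, t) \<in> insert ed F" if "1 \<le> t" "t < \<sigma>" "(y, Chg t) \<in> Vs" for t
    proof -
      have "s = t" using chg_in[OF that(3) e] .
      then show ?thesis using ed_def by blast
    qed
    have c6: "\<exists>z t. 1 \<le> t \<and> t < \<sigma> \<and> (z, y, t) \<in> insert ed F" if "(y, Star) \<in> Vs"
      using ed_def s1 s2 by blast
    have edF: "ed \<notin> F" using nF ed_def by blast
    have edE: "ed \<in> Es" using e ed_def by simp
    have R: "invar L' F' \<and> card F' = Suc (card F) \<and> Vsof Vs L \<subseteq> Vsof Vs L' \<and>
     (\<exists>j. Esof L' F' = insert (if True then (v, j, s) else (j, v, s)) (Esof L F) \<and>
          (if True then (v, j, s) else (j, v, s)) \<notin> Esof L F)"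
      by (rule add_edge[OF I lt edd edE edF c4 c5 c6 L'_def F'_def])
    then obtain j where j: "Esof L' F' = insert (v, j, s) (Esof L F)" "(v, j, s) \<notin> Esof L F" by auto
    have "extension_at \<sigma> (Vsof Vs L, Esof L F) (v, s) (Vsof Vs L', Esof L' F')"
      unfolding ext_iff
    proof (intro conjI)
      show "incomplete_toom \<sigma> (Vsof Vs L') (Esof L' F')" using inv_incomplete R by blast
      show "Vsof Vs L \<subseteq> Vsof Vs L'" using R by blast
      show "Esof L F \<subseteq> Esof L' F'" using j by blast
      show "\<exists>w. Esof L' F' - Esof L F = {if s < \<sigma> then (v, w, s) else (w, v, \<sigma>)}"
        using j s2 by (intro exI[of _ j]) auto
    qed
    then show ?thesis using R by blast
  next
    assume h: "((?x, Star) \<in> Vs \<or> (?x, Chg \<sigma>) \<in> Vs) \<and> s = \<sigma> \<and> (\<forall>y. (y, ?x, \<sigma>) \<notin> F)"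
    then have ss: "s = \<sigma>" and nF: "\<forall>y. (y, ?x, \<sigma>) \<notin> F" by auto
    have s1: "1 \<le> \<sigma>" using sig by simp
    obtain y where e: "(y, ?x, \<sigma>) \<in> Es"
    proof -
      from h have "(?x, Star) \<in> Vs \<or> (?x, Chg \<sigma>) \<in> Vs" by simp
      then show ?thesis
      proof
        assume "(?x, Star) \<in> Vs"
        then show ?thesis using star_in_ex[OF Esne _ s1] that by fastforce
      next
        assume "(?x, Chg \<sigma>) \<in> Vs"
        then show ?thesis using chg_in_ex that by blast
      qed
    qed
    define ed where "ed = (y, ?x, \<sigma>)"
    define L' where "L' = (if y \<in> set L then L else L @ [y])"
    define F' where "F' = insert ed F"
    have edd: "ed = (if False then (?x, y, \<sigma>) else (y, ?x, \<sigma>))" using ed_def by simp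
    have c4: "\<exists>z. (y, z, \<sigma>) \<in> insert ed F" if "y \<noteq> v0" "(y, Circ) \<in> Vs \<or> (y, Chg \<sigma>) \<in> Vs"
      using ed_def by blast
    have c5: "\<exists>z. (z, y, t) \<in> insert ed F" if "1 \<le> t" "t < \<sigma>" "(y, Chg t) \<in> Vs" for t
    proof -
      have "\<sigma> = t" using chg_out[OF that(3) e] .
      then show ?thesis using that(2) by simp
    qed
    have c6: "\<exists>z t. 1 \<le> t \<and> t < \<sigma> \<and> (z, y, t) \<in> insert ed F" if "(y, Star) \<in> Vs"
      using star_noout[OF that e] by blast
    have edF: "ed \<notin> F" using nF ed_def by blast
    have edE: "ed \<in> Es" using e ed_def by simp
    have R: "invar L' F' \<and> card F' = Suc (card F) \<and> Vsof Vs L \<subseteq> Vsof Vs L' \<and>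
     (\<exists>j. Esof L' F' = insert (if False then (v, j, \<sigma>) else (j, v, \<sigma>)) (Esof L F) \<and>
          (if False then (v, j, \<sigma>) else (j, v, \<sigma>)) \<notin> Esof L F)"
      by (rule add_edge[OF I lt edd edE edF c4 c5 c6 L'_def F'_def])
    then obtain j where j: "Esof L' F' = insert (j, v, \<sigma>) (Esof L F)" "(j, v, \<sigma>) \<notin> Esof L F" by auto
    have "extension_at \<sigma> (Vsof Vs L, Esof L F) (v, s) (Vsof Vs L', Esof L' F')"
      unfolding ext_iff
    proof (intro conjI)
      show "incomplete_toom \<sigma> (Vsof Vs L') (Esof L' F')" using inv_incomplete R by blast
      show "Vsof Vs L \<subseteq> Vsof Vs L'" using R by blast
      show "Esof L F \<subseteq> Esof L' F'" using j by blast
      show "\<exists>w. Esof L' F' - Esof L F = {if s < \<sigma> then (v, w, s) else (w, v, \<sigma>)}"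
        using j ss by (intro exI[of _ j]) auto
    qed
    then show ?thesis using R by blast
  qed
qed

definition mu :: "'v list \<Rightarrow> ('v \<times> 'v \<times> nat) set \<Rightarrow> nat \<times> nat" where
  "mu L F = (SOME le. most_urgent_loose_end \<sigma> (Vsof Vs L) (Esof L F) le)"

definition Qr :: "'v list \<times> ('v \<times> 'v \<times> nat) set \<Rightarrow> 'v list \<times> ('v \<times> 'v \<times> nat) set \<Rightarrow> bool" where
  "Qr st st' \<longleftrightarrow> invar (fst st') (snd st') \<and> card (snd st') = Suc (card (snd st)) \<and>
     extension_at \<sigma> (Vsof Vs (fst st), Esof (fst st) (snd st)) (mu (fst st) (snd st))
        (Vsof Vs (fst st'), Esof (fst st') (snd st'))"

definition nxt :: "'v list \<times> ('v \<times> 'v \<times> nat) set \<Rightarrow> 'v list \<times> ('v \<times> 'v \<times> nat) set" where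
  "nxt st = (SOME st'. Qr st st')"

definition stt :: "nat \<Rightarrow> 'v list \<times> ('v \<times> 'v \<times> nat) set" where
  "stt e = (nxt ^^ e) ([v0], {})"

lemma mu_ok: assumes I: "invar L F" and ne: "F \<noteq> Es"
  shows "most_urgent_loose_end \<sigma> (Vsof Vs L) (Esof L F) (mu L F)"
proof -
  obtain le where "loose_end \<sigma> (Vsof Vs L) (Esof L F) le" using nostuck[OF I ne] by blast
  then have "\<exists>le'. most_urgent_loose_end \<sigma> (Vsof Vs L) (Esof L F) le'" by (rule mu_exists)
  then show ?thesis unfolding mu_def by (rule someI_ex)
qed

lemma nxt_ok: assumes I: "invar L F" and ne: "F \<noteq> Es" shows "Qr (L, F) (nxt (L, F))"
proof -
  obtain v s where vs: "mu L F = (v, s)" by (cases "mu L F")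
  have "loose_end \<sigma> (Vsof Vs L) (Esof L F) (v, s)"
    using mu_ok[OF I ne] vs unfolding most_urgent_loose_end_def by simp
  then obtain L' F' where "invar L' F' \<and> card F' = Suc (card F) \<and>
           extension_at \<sigma> (Vsof Vs L, Esof L F) (v, s) (Vsof Vs L', Esof L' F')"
    using step_main[OF I ne] by blast
  then have "Qr (L, F) (L', F')" unfolding Qr_def using vs by simp
  then show ?thesis unfolding nxt_def by (rule someI)
qed

lemma inv0: "invar [v0] {}"
  unfolding invar_def
proof (intro conjI)
  show "graph_connected {0..length [v0] - 1} (Esof [v0] {})" unfolding gc_def2 by simp
  show "\<forall>x\<in>set [v0]. \<forall>s. 1 \<le> s \<longrightarrow> s < \<sigma> \<longrightarrow> (x, Chg s) \<in> Vs \<longrightarrow> (\<exists>y. (y, x, s) \<in> {})"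
    using circ_ne_chg v0C' by auto
  show "\<forall>x\<in>set [v0]. (x, Star) \<in> Vs \<longrightarrow> (\<exists>y s. 1 \<le> s \<and> s < \<sigma> \<and> (y, x, s) \<in> {})"
    using circ_ne_star v0C' by auto
qed (use v0V in auto)

lemma stt_Suc: "stt (Suc e) = nxt (stt e)"
  unfolding stt_def by simp

lemma stt_inv: "e \<le> card Es \<Longrightarrow> invar (fst (stt e)) (snd (stt e)) \<and> card (snd (stt e)) = e"
proof (induction e)
  case 0
  then show ?case using inv0 unfolding stt_def by simp
next
  case (Suc e)
  then have I: "invar (fst (stt e)) (snd (stt e))" and c: "card (snd (stt e)) = e" by auto
  have "snd (stt e) \<noteq> Es" using c Suc.prems by auto
  then have "Qr (fst (stt e), snd (stt e)) (nxt (fst (stt e), snd (stt e)))" using nxt_ok[OF I] by blast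
  then have "Qr (stt e) (stt (Suc e))" using stt_Suc by simp
  then show ?case unfolding Qr_def using c by simp
qed

lemma stt_step: assumes "0 < e" "e \<le> card Es"
  shows "most_urgent_loose_end \<sigma> (Vsof Vs (fst (stt (e - 1)))) (Esof (fst (stt (e - 1))) (snd (stt (e - 1)))) (mu (fst (stt (e - 1))) (snd (stt (e - 1))))
    \<and> extension_at \<sigma> (Vsof Vs (fst (stt (e - 1))), Esof (fst (stt (e - 1))) (snd (stt (e - 1)))) (mu (fst (stt (e - 1))) (snd (stt (e - 1))))
        (Vsof Vs (fst (stt e)), Esof (fst (stt e)) (snd (stt e)))"
proof -
  obtain k where k: "e = Suc k" using assms(1) by (cases e) auto
  have I: "invar (fst (stt k)) (snd (stt k))" and c: "card (snd (stt k)) = k" using stt_inv[of k] assms k by auto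
  have ne: "snd (stt k) \<noteq> Es" using c assms k by auto
  have "Qr (fst (stt k), snd (stt k)) (nxt (fst (stt k), snd (stt k)))" using nxt_ok[OF I ne] by blast
  then have "Qr (stt k) (stt (Suc k))" using stt_Suc by simp
  then show ?thesis using mu_ok[OF I ne] k unfolding Qr_def by simp
qed

lemma final_state: defines "L \<equiv> fst (stt (card Es))" and "F \<equiv> snd (stt (card Es))"
  shows "invar L F" "F = Es" "set L = V"
proof -
  show I: "invar L F" using stt_inv[of "card Es"] unfolding L_def F_def by simp
  have c: "card F = card Es" using stt_inv[of "card Es"] unfolding F_def by simp
  show FE: "F = Es" using card_subset_eq[OF finEs invD(5)[OF I] c] .
  have closed: "q \<in> set L" if h: "(p, q) \<in> adjr Es" "p \<in> set L" for p q
  proof -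
    obtain b where "(p, q, b) \<in> Es \<or> (q, p, b) \<in> Es" using h(1) adjr_iff by metis
    then show ?thesis using invD(6)[OF I] FE by blast
  qed
  have v0L: "v0 \<in> set L" using invD(2,3)[OF I] by (metis length_greater_0_conv nth_mem)
  have "V \<subseteq> set L"
  proof
    fix x assume "x \<in> V"
    then have "(v0, x) \<in> (adjr Es)\<^sup>*" using gcD[OF conn v0V] by blast
    then show "x \<in> set L" using reach_closed[of v0 x Es "set L"] v0L closed by blast
  qed
  then show "set L = V" using invD(4)[OF I] by blast
qed

definition valid :: "('v \<Rightarrow> nat) \<Rightarrow> (nat \<Rightarrow> (nat \<times> vty) set \<times> (nat \<times> nat \<times> nat) set) \<Rightarrow> bool" where
  "valid \<eta> G \<longleftrightarrow> (\<forall>e\<le>card Es. incomplete_toom \<sigma> (fst (G e)) (snd (G e))) \<and>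
               \<eta> v0 = 0 \<and>
               G 0 = trivial_incomplete_toom \<and>
               relabel (inv_into V \<eta>) (G (card Es)) = (Vs, Es) \<and>
               (\<forall>e. 0 < e \<and> e \<le> card Es \<longrightarrow>
                  (\<exists>le. most_urgent_loose_end \<sigma> (fst (G (e - 1))) (snd (G (e - 1))) le \<and>
                        extension_at \<sigma> (G (e - 1)) le (G e)))"

lemma cardV: "card V \<ge> 1" using v0V finV by (metis One_nat_def Suc_leI card_gt_0_iff empty_iff)

lemma existence: "\<exists>\<eta> G. bij_betw \<eta> V {0..card V - 1} \<and> valid \<eta> G"
proof -
  define L where "L = fst (stt (card Es))"
  have I: "invar L (snd (stt (card Es)))" and FE: "snd (stt (card Es)) = Es" and LV: "set L = V"
    using final_state unfolding L_def by auto
  have dL: "distinct L" using invD(1)[OF I] .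
  have lenL: "length L = card V" using distinct_card[OF dL] LV by simp
  have b1: "bij_betw ((!) L) {..<length L} V" by (rule bij_betw_nth[OF dL refl LV[symmetric]])
  define \<eta> where "\<eta> = inv_into {..<length L} ((!) L)"
  have iv: "{..<card V} = {0..card V - 1}" using cardV by auto
  have bij: "bij_betw \<eta> V {0..card V - 1}" unfolding \<eta>_def using bij_betw_inv_into[OF b1] lenL iv by simp
  have finv: "inv_into V \<eta> i = L ! i" if "i < length L" for i
    unfolding \<eta>_def using inv_into_inv_into_eq[OF b1] that by simp
  define G where "G e = (Vsof Vs (fst (stt e)), Esof (fst (stt e)) (snd (stt e)))" for e
  have v1: "\<forall>e\<le>card Es. incomplete_toom \<sigma> (fst (G e)) (snd (G e))"
    using stt_inv inv_incomplete unfolding G_def by simp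
  have v2: "\<eta> v0 = 0"
  proof -
    have "L ! 0 = v0" using invD(3)[OF I] .
    moreover have "0 < length L" using invD(2)[OF I] by simp
    moreover have "inj_on ((!) L) {..<length L}" using b1 bij_betw_def by blast
    ultimately show ?thesis unfolding \<eta>_def by (metis inv_into_f_f lessThan_iff)
  qed
  have v3: "G 0 = trivial_incomplete_toom"
  proof -
    have s0: "stt 0 = ([v0], {})" unfolding stt_def by simp
    have "Vsof Vs [v0] = {(0, Circ)}"
    proof (rule set_eqI)
      fix p :: "nat \<times> vty"
      obtain i a where p: "p = (i, a)" by (cases p)
      have "(i, a) \<in> Vsof Vs [v0] \<longleftrightarrow> i = 0 \<and> a = Circ"
        using uniq_type[OF v0C', of a] v0C' by auto
      then show "p \<in> Vsof Vs [v0] \<longleftrightarrow> p \<in> {(0, Circ)}" using p by simp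
    qed
    moreover have "Esof [v0] {} = {}" unfolding Esof_def by simp
    ultimately show ?thesis unfolding G_def trivial_incomplete_toom_def using s0 by simp
  qed
  have v4: "relabel (inv_into V \<eta>) (G (card Es)) = (Vs, Es)"
  proof -
    have A: "(\<lambda>(u, a). (inv_into V \<eta> u, a)) ` Vsof Vs L = Vs"
    proof
      show "(\<lambda>(u, a). (inv_into V \<eta> u, a)) ` Vsof Vs L \<subseteq> Vs"
      proof
        fix q assume "q \<in> (\<lambda>(u, a). (inv_into V \<eta> u, a)) ` Vsof Vs L"
        then obtain i a where "(i, a) \<in> Vsof Vs L" "q = (inv_into V \<eta> i, a)" by auto
        then show "q \<in> Vs" using finv by auto
      qed
      show "Vs \<subseteq> (\<lambda>(u, a). (inv_into V \<eta> u, a)) ` Vsof Vs L"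
      proof
        fix q assume q: "q \<in> Vs"
        obtain x a where xa: "q = (x, a)" by (cases q)
        then have "x \<in> set L" using q typeD LV by auto
        then obtain i where i: "i < length L" "L ! i = x" by (rule idxE)
        then have "(i, a) \<in> Vsof Vs L" using q xa by simp
        moreover have "q = (\<lambda>(u, a). (inv_into V \<eta> u, a)) (i, a)" using finv i xa by simp
        ultimately show "q \<in> (\<lambda>(u, a). (inv_into V \<eta> u, a)) ` Vsof Vs L" by blast
      qed
    qed
    have B: "(\<lambda>(u, w, b). (inv_into V \<eta> u, inv_into V \<eta> w, b)) ` Esof L Es = Es"
    proof
      show "(\<lambda>(u, w, b). (inv_into V \<eta> u, inv_into V \<eta> w, b)) ` Esof L Es \<subseteq> Es"
      proof
        fix q assume "q \<in> (\<lambda>(u, w, b). (inv_into V \<eta> u, inv_into V \<eta> w, b)) ` Esof L Es"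
        then obtain i j b where "(i, j, b) \<in> Esof L Es" "q = (inv_into V \<eta> i, inv_into V \<eta> j, b)" by auto
        then show "q \<in> Es" using finv by auto
      qed
      show "Es \<subseteq> (\<lambda>(u, w, b). (inv_into V \<eta> u, inv_into V \<eta> w, b)) ` Esof L Es"
      proof
        fix q assume q: "q \<in> Es"
        obtain x y b where xa: "q = (x, y, b)" by (cases q)
        then have "x \<in> set L" "y \<in> set L" using q edgeD LV by auto
        then obtain i j where i: "i < length L" "L ! i = x" and j: "j < length L" "L ! j = y"
          by (meson idxE)
        then have "(i, j, b) \<in> Esof L Es" using q xa by simp
        moreover have "q = (\<lambda>(u, w, b). (inv_into V \<eta> u, inv_into V \<eta> w, b)) (i, j, b)" using finv i j xa by simp
        ultimately show "q \<in> (\<lambda>(u, w, b). (inv_into V \<eta> u, inv_into V \<eta> w, b)) ` Esof L Es" by blast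
      qed
    qed
    show ?thesis unfolding relabel_def G_def using A B FE L_def by simp
  qed
  have v5: "\<forall>e. 0 < e \<and> e \<le> card Es \<longrightarrow>
                  (\<exists>le. most_urgent_loose_end \<sigma> (fst (G (e - 1))) (snd (G (e - 1))) le \<and>
                        extension_at \<sigma> (G (e - 1)) le (G e))"
  proof (intro allI impI)
    fix e assume h: "0 < e \<and> e \<le> card Es"
    then have "most_urgent_loose_end \<sigma> (Vsof Vs (fst (stt (e - 1)))) (Esof (fst (stt (e - 1))) (snd (stt (e - 1)))) (mu (fst (stt (e - 1))) (snd (stt (e - 1))))
    \<and> extension_at \<sigma> (Vsof Vs (fst (stt (e - 1))), Esof (fst (stt (e - 1))) (snd (stt (e - 1)))) (mu (fst (stt (e - 1))) (snd (stt (e - 1))))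
        (Vsof Vs (fst (stt e)), Esof (fst (stt e)) (snd (stt e)))" using stt_step by blast
    then show "\<exists>le. most_urgent_loose_end \<sigma> (fst (G (e - 1))) (snd (G (e - 1))) le \<and>
                        extension_at \<sigma> (G (e - 1)) le (G e)"
      unfolding G_def fst_conv snd_conv by (rule exI)
  qed
  have "valid \<eta> G" unfolding valid_def using v1 v2 v3 v4 v5 by blast
  then show ?thesis using bij by blast
qed

lemma ext_D: assumes "extension_at \<sigma>' G le G'"
  shows "fst G \<subseteq> fst G' \<and> snd G \<subseteq> snd G' \<and> incomplete_toom \<sigma>' (fst G') (snd G') \<and>
    (\<exists>w. snd G' - snd G = {if snd le < \<sigma>' then (fst le, w, snd le) else (w, fst le, \<sigma>')})"
proof -
  obtain A B A' B' v s where e: "G = (A, B)" "G' = (A', B')" "le = (v, s)" by (cases G, cases G', cases le) auto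
  show ?thesis using assms unfolding e ext_iff fst_conv snd_conv by blast
qed

lemma inc_dom: assumes "incomplete_toom \<sigma>' A B"
  shows "\<exists>N. Domain A = {0..N} \<and> (\<forall>x y b. (x, y, b) \<in> B \<longrightarrow> x \<le> N \<and> y \<le> N) \<and>
     graph_connected {0..N} B \<and> (0, Circ) \<in> A"
proof -
  obtain N where td: "typed_digraph {0..N} (vtypes \<sigma>') {1..\<sigma>'} A B" and gc: "graph_connected {0..N} B"
    and c0: "(0, Circ) \<in> A"
    using assms unfolding incomplete_toom_def by blast
  have A1: "A \<subseteq> {0..N} \<times> vtypes \<sigma>'" and B1: "B \<subseteq> {0..N} \<times> {0..N} \<times> {1..\<sigma>'}"
    and A2: "\<forall>v\<in>{0..N}. \<exists>a. (v, a) \<in> A" using td unfolding typed_digraph_def by auto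
  have "Domain A = {0..N}"
  proof
    show "Domain A \<subseteq> {0..N}" using A1 by auto
    show "{0..N} \<subseteq> Domain A" using A2 by auto
  qed
  moreover have "\<forall>x y b. (x, y, b) \<in> B \<longrightarrow> x \<le> N \<and> y \<le> N" using B1 by auto
  ultimately show ?thesis using gc c0 by blast
qed

lemma step_shape:
  assumes inc: "incomplete_toom \<sigma> A B" and ext: "extension_at \<sigma> (A, B) (v, s) (A', B')"
    and lo: "loose_end \<sigma> A B (v, s)"
  shows "\<exists>w. B' = insert (if s < \<sigma> then (v, w, s) else (w, v, \<sigma>)) B \<and> Domain A \<subseteq> Domain A' \<and>
     Domain A' \<subseteq> insert w (Domain A) \<and> w \<in> Domain A' \<and> v \<in> Domain A"
proof -
  have AA: "A \<subseteq> A'" and BB: "B \<subseteq> B'" and inc': "incomplete_toom \<sigma> A' B'"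
    and ex: "\<exists>w. B' - B = {if s < \<sigma> then (v, w, s) else (w, v, \<sigma>)}" using ext unfolding ext_iff by auto
  obtain w where w: "B' - B = {if s < \<sigma> then (v, w, s) else (w, v, \<sigma>)}" using ex by blast
  define ed where "ed = (if s < \<sigma> then (v, w, s) else (w, v, \<sigma>))"
  have B'eq: "B' = insert ed B" using w BB unfolding ed_def by blast
  obtain N where N: "Domain A = {0..N}" "\<forall>x y b. (x, y, b) \<in> B \<longrightarrow> x \<le> N \<and> y \<le> N" "(0, Circ) \<in> A"
    using inc_dom[OF inc] by blast
  obtain N' where N': "Domain A' = {0..N'}" "\<forall>x y b. (x, y, b) \<in> B' \<longrightarrow> x \<le> N' \<and> y \<le> N'"
    "graph_connected {0..N'} B'" using inc_dom[OF inc'] by blast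
  have vD: "v \<in> Domain A" using lo unfolding loose_end_def Vty_def by auto
  have DD: "Domain A \<subseteq> Domain A'" using AA by auto
  have edB': "ed \<in> B'" using B'eq by simp
  have wD: "w \<in> Domain A'"
  proof (cases "s < \<sigma>")
    case True
    then have "(v, w, s) \<in> B'" using edB' ed_def by simp
    then have "w \<le> N'" using N'(2) by blast
    then show ?thesis using N'(1) by simp
  next
    case False
    then have "(w, v, \<sigma>) \<in> B'" using edB' ed_def by simp
    then have "w \<le> N'" using N'(2) by blast
    then show ?thesis using N'(1) by simp
  qed
  have sub: "Domain A' \<subseteq> insert w (Domain A)"
  proof
    fix u assume u: "u \<in> Domain A'"
    have z: "0 \<in> Domain A'" using N' by simp
    have r: "(0, u) \<in> (adjr B')\<^sup>*" using gcD[OF N'(3)] z u N'(1) by simp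
    have z2: "0 \<in> insert w (Domain A)" using N by simp
    have cl: "q \<in> insert w (Domain A)" if h: "(p, q) \<in> adjr B'" "p \<in> insert w (Domain A)" for p q
    proof -
      obtain b where "(p, q, b) \<in> B' \<or> (q, p, b) \<in> B'" using h(1) adjr_iff by metis
      then show ?thesis
      proof
        assume pq: "(p, q, b) \<in> B'"
        show ?thesis
        proof (cases "(p, q, b) = ed")
          case True then show ?thesis using vD unfolding ed_def by (cases "s < \<sigma>") auto
        next
          case False then have "(p, q, b) \<in> B" using pq B'eq by simp
          then have "q \<le> N" using N(2) by blast
          then show ?thesis using N(1) by simp
        qed
      next
        assume pq: "(q, p, b) \<in> B'"
        show ?thesis
        proof (cases "(q, p, b) = ed")
          case True then show ?thesis using vD unfolding ed_def by (cases "s < \<sigma>") auto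
        next
          case False then have "(q, p, b) \<in> B" using pq B'eq by simp
          then have "q \<le> N" using N(2) by blast
          then show ?thesis using N(1) by simp
        qed
      qed
    qed
    show "u \<in> insert w (Domain A)" using reach_closed[OF r z2] cl by blast
  qed
  show ?thesis using B'eq ed_def DD sub wD vD by blast
qed

lemma interval_step: assumes "Domain A = {0..N}" "Domain A' = {0..N'}" "Domain A' \<subseteq> insert w (Domain A)" "w \<in> Domain A'"
  shows "w \<le> Suc N"
proof (rule ccontr)
  assume "\<not> w \<le> Suc N"
  then have "Suc N \<in> Domain A'" using assms(2,4) by auto
  then show False using assms(1,3) \<open>\<not> w \<le> Suc N\<close> by auto
qed

lemma ivl: "{0..card V - 1} = {..<card V}" using cardV by auto

lemma vf_bij: assumes "bij_betw \<eta> V {0..card V - 1}" shows "bij_betw (inv_into V \<eta>) {..<card V} V"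
  using bij_betw_inv_into[OF assms] ivl by simp

lemma vf_inv: assumes "bij_betw \<eta> V {0..card V - 1}" "v \<in> V"
  shows "inv_into V \<eta> (\<eta> v) = v" "\<eta> v < card V"
proof -
  show "inv_into V \<eta> (\<eta> v) = v" using assms bij_betw_def inv_into_f_f by metis
  show "\<eta> v < card V" using assms ivl bij_betwE by blast
qed

lemma valid_mono: assumes val: "valid \<eta> G"
  shows "e \<le> e' \<Longrightarrow> e' \<le> card Es \<Longrightarrow> fst (G e) \<subseteq> fst (G e') \<and> snd (G e) \<subseteq> snd (G e')"
proof (induction e')
  case 0 then show ?case by simp
next
  case (Suc k)
  show ?case
  proof (cases "e = Suc k")
    case True then show ?thesis by simp
  next
    case False
    then have ek: "e \<le> k" using Suc.prems by simp
    have ih: "fst (G e) \<subseteq> fst (G k) \<and> snd (G e) \<subseteq> snd (G k)" using Suc.IH ek Suc.prems by simp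
    have "\<exists>le. most_urgent_loose_end \<sigma> (fst (G (Suc k - 1))) (snd (G (Suc k - 1))) le \<and>
                        extension_at \<sigma> (G (Suc k - 1)) le (G (Suc k))"
      using val Suc.prems unfolding valid_def by blast
    then obtain le where "extension_at \<sigma> (G k) le (G (Suc k))" by auto
    then have "fst (G k) \<subseteq> fst (G (Suc k)) \<and> snd (G k) \<subseteq> snd (G (Suc k))" using ext_D by blast
    then show ?thesis using ih by blast
  qed
qed

lemma valid_rel: assumes val: "valid \<eta> G"
  shows "(\<lambda>(u, a). (inv_into V \<eta> u, a)) ` fst (G (card Es)) = Vs"
    "(\<lambda>(u, w, b). (inv_into V \<eta> u, inv_into V \<eta> w, b)) ` snd (G (card Es)) = Es"
  using val unfolding valid_def relabel_def by auto

lemma valid_ty: assumes val: "valid \<eta> G" and e: "e \<le> card Es" and ua: "(u, a) \<in> fst (G e)"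
  shows "(inv_into V \<eta> u, a) \<in> Vs"
proof -
  have "(u, a) \<in> fst (G (card Es))" using valid_mono[OF val _ order_refl, of e] e ua by blast
  then show ?thesis using valid_rel(1)[OF val] by force
qed

lemma valid_ed: assumes val: "valid \<eta> G" and e: "e \<le> card Es" and ua: "(x, y, b) \<in> snd (G e)"
  shows "(inv_into V \<eta> x, inv_into V \<eta> y, b) \<in> Es"
proof -
  have "(x, y, b) \<in> snd (G (card Es))" using valid_mono[OF val _ order_refl, of e] e ua by blast
  then show ?thesis using valid_rel(2)[OF val] by force
qed

lemma valid_types: assumes val: "valid \<eta> G" and e: "e \<le> card Es"
  shows "fst (G e) = {(u, a). u \<in> Domain (fst (G e)) \<and> (inv_into V \<eta> u, a) \<in> Vs}"
proof
  show "fst (G e) \<subseteq> {(u, a). u \<in> Domain (fst (G e)) \<and> (inv_into V \<eta> u, a) \<in> Vs}"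
  proof
    fix p assume p: "p \<in> fst (G e)"
    obtain u a where ua: "p = (u, a)" by (cases p)
    then show "p \<in> {(u, a). u \<in> Domain (fst (G e)) \<and> (inv_into V \<eta> u, a) \<in> Vs}"
      using p valid_ty[OF val e, of u a] by auto
  qed
  show "{(u, a). u \<in> Domain (fst (G e)) \<and> (inv_into V \<eta> u, a) \<in> Vs} \<subseteq> fst (G e)"
  proof
    fix p assume p: "p \<in> {(u, a). u \<in> Domain (fst (G e)) \<and> (inv_into V \<eta> u, a) \<in> Vs}"
    obtain u a where ua: "p = (u, a)" by (cases p)
    then have uD: "u \<in> Domain (fst (G e))" and t: "(inv_into V \<eta> u, a) \<in> Vs" using p by auto
    obtain a0 where a0: "(u, a0) \<in> fst (G e)" using uD by auto
    have "(inv_into V \<eta> u, a0) \<in> Vs" using valid_ty[OF val e a0] .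
    then have "a = a0" using uniq_type t by blast
    then show "p \<in> fst (G e)" using a0 ua by simp
  qed
qed

lemma valid_surj: assumes val: "valid \<eta> G"
  shows "V \<subseteq> inv_into V \<eta> ` Domain (fst (G (card Es)))"
proof
  fix x assume "x \<in> V"
  then obtain a where "(x, a) \<in> Vs" using has_type by blast
  then obtain u a' where "(u, a') \<in> fst (G (card Es))" "(x, a) = (inv_into V \<eta> u, a')"
    using valid_rel(1)[OF val] by force
  then show "x \<in> inv_into V \<eta> ` Domain (fst (G (card Es)))" by force
qed

lemma uniqueness:
  assumes b1: "bij_betw \<eta> V {0..card V - 1}" and v1: "valid \<eta> G"
    and b2: "bij_betw \<eta>' V {0..card V - 1}" and v2: "valid \<eta>' G'"
  shows "\<forall>v\<in>V. \<eta>' v = \<eta> v"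
proof -
  define f where "f = inv_into V \<eta>"
  define f' where "f' = inv_into V \<eta>'"
  define n where "n = card V"
  define M where "M = card Es"
  have finj: "inj_on f {..<n}" using vf_bij[OF b1] unfolding f_def n_def bij_betw_def by blast
  have finj': "inj_on f' {..<n}" using vf_bij[OF b2] unfolding f'_def n_def bij_betw_def by blast
  have e0: "\<eta> v0 = 0" "\<eta>' v0 = 0" using v1 v2 unfolding valid_def by auto
  have f0: "f 0 = v0" using vf_inv(1)[OF b1 v0V] e0 unfolding f_def by simp
  have f0': "f' 0 = v0" using vf_inv(1)[OF b2 v0V] e0 unfolding f'_def by simp
  have G0: "G 0 = G' 0" using v1 v2 unfolding valid_def by simp
  have inc: "incomplete_toom \<sigma> (fst (G e)) (snd (G e))" if "e \<le> M" for e
    using v1 that unfolding valid_def M_def by blast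
  have inc': "incomplete_toom \<sigma> (fst (G' e)) (snd (G' e))" if "e \<le> M" for e
    using v2 that unfolding valid_def M_def by blast
  have stp: "\<exists>le. most_urgent_loose_end \<sigma> (fst (G k)) (snd (G k)) le \<and> extension_at \<sigma> (G k) le (G (Suc k))"
    if "Suc k \<le> M" for k
  proof -
    have "\<exists>le. most_urgent_loose_end \<sigma> (fst (G (Suc k - 1))) (snd (G (Suc k - 1))) le \<and>
                        extension_at \<sigma> (G (Suc k - 1)) le (G (Suc k))"
      using v1 that unfolding valid_def M_def by blast
    then show ?thesis by simp
  qed
  have stp': "\<exists>le. most_urgent_loose_end \<sigma> (fst (G' k)) (snd (G' k)) le \<and> extension_at \<sigma> (G' k) le (G' (Suc k))"
    if "Suc k \<le> M" for k
  proof -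
    have "\<exists>le. most_urgent_loose_end \<sigma> (fst (G' (Suc k - 1))) (snd (G' (Suc k - 1))) le \<and>
                        extension_at \<sigma> (G' (Suc k - 1)) le (G' (Suc k))"
      using v2 that unfolding valid_def M_def by blast
    then show ?thesis by simp
  qed
  define P where "P e \<longleftrightarrow> (G e = G' e \<and> (\<forall>u\<in>Domain (fst (G e)). u < n \<longrightarrow> f u = f' u)) \<or> (\<forall>u<n. f u = f' u)" for e
  have PM: "P e" if "e \<le> M" for e
    using that
  proof (induction e)
    case 0
    have "Domain (fst (G 0)) = {0}" using v1 unfolding valid_def trivial_incomplete_toom_def by auto
    then show ?case unfolding P_def using G0 f0 f0' by auto
  next
    case (Suc k)
    have kM: "k \<le> M" using Suc.prems by simp
    have IH: "P k" using Suc.IH kM by blast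
    show ?case
    proof (cases "\<forall>u<n. f u = f' u")
      case True then show ?thesis unfolding P_def by blast
    next
      case False
      then have ag: "G k = G' k" and agf: "\<And>u. u \<in> Domain (fst (G k)) \<Longrightarrow> u < n \<Longrightarrow> f u = f' u"
        using IH unfolding P_def by blast+
      obtain A B where AB: "G k = (A, B)" by (cases "G k")
      have AB': "G' k = (A, B)" using ag AB by simp
      have incA: "incomplete_toom \<sigma> A B" using inc[OF kM] AB by simp
      obtain N where N: "Domain A = {0..N}" using inc_dom[OF incA] by blast
      show ?thesis
      proof (cases "n \<le> Suc N")
        case True
        have "f u = f' u" if "u < n" for u
        proof -
          have "u \<in> Domain (fst (G k))" using that True N AB by auto
          then show ?thesis using agf that by blast
        qed
        then show ?thesis unfolding P_def by blast
      next
        case False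
        then have Nn: "Suc N < n" by simp
        obtain le1 where le1: "most_urgent_loose_end \<sigma> A B le1" "extension_at \<sigma> (A, B) le1 (G (Suc k))"
          using stp[OF Suc.prems] AB by auto
        obtain le2 where le2: "most_urgent_loose_end \<sigma> A B le2" "extension_at \<sigma> (A, B) le2 (G' (Suc k))"
          using stp'[OF Suc.prems] AB' by auto
        have "le1 = le2" using mu_unique[OF le1(1) le2(1)] .
        obtain v s where vs: "le1 = (v, s)" by (cases le1)
        obtain A1 B1 where AB1: "G (Suc k) = (A1, B1)" by (cases "G (Suc k)")
        obtain A2 B2 where AB2: "G' (Suc k) = (A2, B2)" by (cases "G' (Suc k)")
        have lo: "loose_end \<sigma> A B (v, s)" using le1(1) vs unfolding most_urgent_loose_end_def by simp
        have ex1: "extension_at \<sigma> (A, B) (v, s) (A1, B1)" using le1(2) vs AB1 by simp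
        have ex2: "extension_at \<sigma> (A, B) (v, s) (A2, B2)" using le2(2) vs AB2 \<open>le1 = le2\<close> by simp
        obtain w1 where w1: "B1 = insert (if s < \<sigma> then (v, w1, s) else (w1, v, \<sigma>)) B"
          "Domain A \<subseteq> Domain A1" "Domain A1 \<subseteq> insert w1 (Domain A)" "w1 \<in> Domain A1" "v \<in> Domain A"
          using step_shape[OF incA ex1 lo] by blast
        obtain w2 where w2: "B2 = insert (if s < \<sigma> then (v, w2, s) else (w2, v, \<sigma>)) B"
          "Domain A \<subseteq> Domain A2" "Domain A2 \<subseteq> insert w2 (Domain A)" "w2 \<in> Domain A2"
          using step_shape[OF incA ex2 lo] by blast
        have incA1: "incomplete_toom \<sigma> A1 B1" using inc[OF Suc.prems] AB1 by simp
        have incA2: "incomplete_toom \<sigma> A2 B2" using inc'[OF Suc.prems] AB2 by simp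
        obtain N1 where N1: "Domain A1 = {0..N1}" using inc_dom[OF incA1] by blast
        obtain N2 where N2: "Domain A2 = {0..N2}" using inc_dom[OF incA2] by blast
        have w1N: "w1 \<le> Suc N" by (rule interval_step[OF N N1 w1(3) w1(4)])
        have w2N: "w2 \<le> Suc N" by (rule interval_step[OF N N2 w2(3) w2(4)])
        have w1n: "w1 < n" and w2n: "w2 < n" using w1N w2N Nn by auto
        have vN: "v \<le> N" using w1(5) N by simp
        have vn: "v < n" using vN Nn by simp
        have fv: "f v = f' v" using agf[of v] w1(5) AB vn by simp
        have ed1: "(if s < \<sigma> then (v, w1, s) else (w1, v, \<sigma>)) \<in> snd (G (Suc k))" using w1(1) AB1 by simp
        have ed2: "(if s < \<sigma> then (v, w2, s) else (w2, v, \<sigma>)) \<in> snd (G' (Suc k))" using w2(1) AB2 by simp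
        have fw: "f w1 = f' w2"
        proof (cases "s < \<sigma>")
          case True
          have "(f v, f w1, s) \<in> Es" using valid_ed[OF v1 Suc.prems[unfolded M_def], of v w1 s] ed1 True unfolding f_def by simp
          moreover have "(f' v, f' w2, s) \<in> Es" using valid_ed[OF v2 Suc.prems[unfolded M_def], of v w2 s] ed2 True unfolding f'_def by simp
          ultimately show ?thesis using out_uniq fv by simp
        next
          case False
          have "(f w1, f v, \<sigma>) \<in> Es" using valid_ed[OF v1 Suc.prems[unfolded M_def], of w1 v \<sigma>] ed1 False unfolding f_def by simp
          moreover have "(f' w2, f' v, \<sigma>) \<in> Es" using valid_ed[OF v2 Suc.prems[unfolded M_def], of w2 v \<sigma>] ed2 False unfolding f'_def by simp
          ultimately show ?thesis using in_uniq fv by simp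
        qed
        have DA: "Domain A = Domain (fst (G k))" using AB by simp
        have ww: "w1 = w2"
        proof (cases "w1 \<in> Domain A")
          case T1: True
          have fw1: "f w1 = f' w1" using agf[of w1] T1 DA w1n by simp
          then have "f' w1 = f' w2" using fw by simp
          then show ?thesis using finj' w1n w2n unfolding inj_on_def by blast
        next
          case F1: False
          show ?thesis
          proof (cases "w2 \<in> Domain A")
            case T2: True
            have "f w2 = f' w2" using agf[of w2] T2 DA w2n by simp
            then have "f w1 = f w2" using fw by simp
            then show ?thesis using finj w1n w2n unfolding inj_on_def by blast
          next
            case F2: False
            have "w1 = Suc N" using F1 N w1N by auto
            moreover have "w2 = Suc N" using F2 N w2N by auto
            ultimately show ?thesis by simp
          qed
        qed
        have BB: "B1 = B2" using w1(1) w2(1) ww by simp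
        have D1: "Domain A1 = insert w1 (Domain A)" using w1(2,3,4) by blast
        have D2: "Domain A2 = insert w1 (Domain A)" using w2(2,3,4) ww by blast
        have Dn: "u < n" if "u \<in> Domain A1" for u
        proof -
          have "u \<le> Suc N" using that D1 N w1N by auto
          then show ?thesis using Nn by simp
        qed
        have agf1: "f u = f' u" if "u \<in> Domain A1" for u
        proof (cases "u = w1")
          case True then show ?thesis using fw ww by simp
        next
          case False
          then have "u \<in> Domain (fst (G k))" using that D1 DA by simp
          then show ?thesis using agf Dn[OF that] by blast
        qed
        have T1: "A1 = {(u, a). u \<in> Domain A1 \<and> (f u, a) \<in> Vs}"
          using valid_types[OF v1 Suc.prems[unfolded M_def]] AB1 unfolding f_def by simp
        have T2: "A2 = {(u, a). u \<in> Domain A2 \<and> (f' u, a) \<in> Vs}"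
          using valid_types[OF v2 Suc.prems[unfolded M_def]] AB2 unfolding f'_def by simp
        have eqm: "(u, a) \<in> {(u, a). u \<in> Domain A1 \<and> (f u, a) \<in> Vs} \<longleftrightarrow> (u, a) \<in> {(u, a). u \<in> Domain A2 \<and> (f' u, a) \<in> Vs}" for u a
        proof (cases "u \<in> Domain A1")
          case True
          then have "f u = f' u" using agf1 by blast
          then show ?thesis using True D1 D2 by simp
        next
          case False
          then show ?thesis using D1 D2 by simp
        qed
        have "{(u, a). u \<in> Domain A1 \<and> (f u, a) \<in> Vs} = {(u, a). u \<in> Domain A2 \<and> (f' u, a) \<in> Vs}"
        proof (rule set_eqI)
          fix p :: "nat \<times> vty"
          show "p \<in> {(u, a). u \<in> Domain A1 \<and> (f u, a) \<in> Vs} \<longleftrightarrow> p \<in> {(u, a). u \<in> Domain A2 \<and> (f' u, a) \<in> Vs}"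
            using eqm[of "fst p" "snd p"] by simp
        qed
        then have AA: "A1 = A2" using T1 T2 by simp
        have "G (Suc k) = G' (Suc k)" using AB1 AB2 AA BB by simp
        moreover have "\<forall>u\<in>Domain (fst (G (Suc k))). u < n \<longrightarrow> f u = f' u" using agf1 AB1 by simp
        ultimately show ?thesis unfolding P_def by blast
      qed
    qed
  qed
  have all: "\<forall>u<n. f u = f' u"
  proof -
    have "P M" using PM by simp
    then show ?thesis unfolding P_def
    proof (elim disjE conjE)
      assume agM: "\<forall>u\<in>Domain (fst (G M)). u < n \<longrightarrow> f u = f' u"
      obtain NM where NM: "Domain (fst (G M)) = {0..NM}" using inc_dom[OF inc[OF order_refl]] by blast
      have "V \<subseteq> f ` {0..NM}" using valid_surj[OF v1] NM unfolding f_def M_def by simp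
      then have "card V \<le> card (f ` {0..NM})" by (rule card_mono[rotated]) simp
      also have "\<dots> \<le> card {0..NM}" by (rule card_image_le) simp
      finally have "n \<le> Suc NM" unfolding n_def by simp
      then show ?thesis using agM NM by auto
    qed auto
  qed
  show ?thesis
  proof
    fix v assume vV: "v \<in> V"
    have a: "f (\<eta> v) = v" "\<eta> v < n" using vf_inv[OF b1 vV] unfolding f_def n_def by auto
    have b: "f' (\<eta>' v) = v" "\<eta>' v < n" using vf_inv[OF b2 vV] unfolding f'_def n_def by auto
    have "f' (\<eta> v) = v" using all a by auto
    then have "f' (\<eta> v) = f' (\<eta>' v)" using b by simp
    then show "\<eta>' v = \<eta> v" using finj' a(2) b(2) unfolding inj_on_def by auto
  qed
qed

end
theorem mainTheorem8:
  fixes \<sigma> :: nat and V :: "'v set" and v0 :: 'v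
    and Vs :: "('v \<times> vty) set" and Es :: "('v \<times> 'v \<times> nat) set"
  assumes "\<sigma> \<ge> 2"
    and "finite V"
    and "toom_graph \<sigma> V Vs Es"
    and "v0 \<in> Vty Vs Circ"
    and "graph_connected V Es"
    and "\<not> trivial_toom Vs Es"
  shows "\<exists>\<eta>. (bij_betw \<eta> V {0..card V - 1} \<and>
            (\<exists>G :: nat \<Rightarrow> (nat \<times> vty) set \<times> (nat \<times> nat \<times> nat) set.
               (\<forall>e\<le>card Es. incomplete_toom \<sigma> (fst (G e)) (snd (G e))) \<and>
               \<eta> v0 = 0 \<and>
               G 0 = trivial_incomplete_toom \<and>
               relabel (inv_into V \<eta>) (G (card Es)) = (Vs, Es) \<and>
               (\<forall>e. 0 < e \<and> e \<le> card Es \<longrightarrow>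
                  (\<exists>le. most_urgent_loose_end \<sigma> (fst (G (e - 1))) (snd (G (e - 1))) le \<and>
                        extension_at \<sigma> (G (e - 1)) le (G e))))) \<and>
          (\<forall>\<eta>'. (bij_betw \<eta>' V {0..card V - 1} \<and>
            (\<exists>G :: nat \<Rightarrow> (nat \<times> vty) set \<times> (nat \<times> nat \<times> nat) set.
               (\<forall>e\<le>card Es. incomplete_toom \<sigma> (fst (G e)) (snd (G e))) \<and>
               \<eta>' v0 = 0 \<and>
               G 0 = trivial_incomplete_toom \<and>
               relabel (inv_into V \<eta>') (G (card Es)) = (Vs, Es) \<and>
               (\<forall>e. 0 < e \<and> e \<le> card Es \<longrightarrow>
                  (\<exists>le. most_urgent_loose_end \<sigma> (fst (G (e - 1))) (snd (G (e - 1))) le \<and>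
                        extension_at \<sigma> (G (e - 1)) le (G e)))))
           \<longrightarrow> (\<forall>v\<in>V. \<eta>' v = \<eta> v))"
proof -
  interpret T: TG \<sigma> V v0 Vs Es using assms by unfold_locales
  obtain \<eta> G where b: "bij_betw \<eta> V {0..card V - 1}" and vG: "T.valid \<eta> G" using T.existence by blast
  show ?thesis
  proof (intro exI[of _ \<eta>] conjI allI impI)
    show "bij_betw \<eta> V {0..card V - 1}" by (rule b)
    show "\<exists>G :: nat \<Rightarrow> (nat \<times> vty) set \<times> (nat \<times> nat \<times> nat) set.
               (\<forall>e\<le>card Es. incomplete_toom \<sigma> (fst (G e)) (snd (G e))) \<and>
               \<eta> v0 = 0 \<and>
               G 0 = trivial_incomplete_toom \<and>
               relabel (inv_into V \<eta>) (G (card Es)) = (Vs, Es) \<and>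
               (\<forall>e. 0 < e \<and> e \<le> card Es \<longrightarrow>
                  (\<exists>le. most_urgent_loose_end \<sigma> (fst (G (e - 1))) (snd (G (e - 1))) le \<and>
                        extension_at \<sigma> (G (e - 1)) le (G e)))"
      using vG unfolding T.valid_def by blast
  next
    fix \<eta>' assume h: "bij_betw \<eta>' V {0..card V - 1} \<and>
            (\<exists>G :: nat \<Rightarrow> (nat \<times> vty) set \<times> (nat \<times> nat \<times> nat) set.
               (\<forall>e\<le>card Es. incomplete_toom \<sigma> (fst (G e)) (snd (G e))) \<and>
               \<eta>' v0 = 0 \<and>
               G 0 = trivial_incomplete_toom \<and>
               relabel (inv_into V \<eta>') (G (card Es)) = (Vs, Es) \<and>
               (\<forall>e. 0 < e \<and> e \<le> card Es \<longrightarrow>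
                  (\<exists>le. most_urgent_loose_end \<sigma> (fst (G (e - 1))) (snd (G (e - 1))) le \<and>
                        extension_at \<sigma> (G (e - 1)) le (G e))))"
    then obtain G' where b': "bij_betw \<eta>' V {0..card V - 1}" and vG': "T.valid \<eta>' G'"
      unfolding T.valid_def by blast
    show "\<forall>v\<in>V. \<eta>' v = \<eta> v" by (rule T.uniqueness[OF b vG b' vG'])
  qed
qed

end
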